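(* Let $D\subseteq\mathbb{R}^2$ be the closed unit disc and $S^1$ its boundary circle. There is a set $A\subseteq D$ which is completely $\mathcal{N}$-nonmeasurable in $D$ and such that for every line $l\subseteq\mathbb{R}^2$, with $\pi:\mathbb{R}^2\to l$ the orthogonal projection onto $l$, the set $\pi[A]$ is completely $\mathcal{N}$-nonmeasurable in $\pi[S^1]$. The same holds with $\mathcal{N}$ replaced by $\mathcal{M}$.
   Context: $\mathcal{N}$ denotes the $\sigma$-ideal of Lebesgue null sets and $\mathcal{M}$ the $\sigma$-ideal of meager sets (in the plane, resp. on the line $l$). For a $\sigma$-ideal $\mathcal{J}$ and a Borel set $Y$, a set $S$ is completely $\mathcal{J}$-nonmeasurable in $Y$ if for every Borel $B\subseteq Y$ with $B\notin\mathcal{J}$ we have $S\cap B\neq\emptyset$ and $B\setminus S\neq\emptyset$. *)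

theory Defs
  imports "HOL-Analysis.Analysis"
begin

definition nowhere_dense :: "'a::topological_space set \<Rightarrow> bool" where
  "nowhere_dense S \<longleftrightarrow> interior (closure S) = {}"

definition meager :: "'a::topological_space set \<Rightarrow> bool" where
  "meager S \<longleftrightarrow> (\<exists>F :: nat \<Rightarrow> 'a set. (\<forall>n. nowhere_dense (F n)) \<and> S \<subseteq> (\<Union>n. F n))"

definition completely_nonmeasurable ::
  "('a set \<Rightarrow> bool) \<Rightarrow> 'a set set \<Rightarrow> 'a set \<Rightarrow> 'a set \<Rightarrow> bool" where
  "completely_nonmeasurable J Bor Y S \<longleftrightarrow>
     (\<forall>B. B \<in> Bor \<and> B \<subseteq> Y \<and> \<not> J B \<longrightarrow> S \<inter> B \<noteq> {} \<and> B - S \<noteq> {})"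

definition plane_null :: "(real^2) set \<Rightarrow> bool" where
  "plane_null B \<longleftrightarrow> B \<in> null_sets lebesgue"

definition plane_meager :: "(real^2) set \<Rightarrow> bool" where
  "plane_meager B \<longleftrightarrow> meager B"

text \<open>The line l through p with unit direction u, parametrised isometrically by
  t \<mapsto> p + t u.  Borel sets, null sets and meager sets on l are transported from the
  real line along this isometry (this does not depend on the choice of p, u).\<close>
definition line_param :: "real^2 \<Rightarrow> real^2 \<Rightarrow> real \<Rightarrow> real^2" where
  "line_param p u t = p + t *\<^sub>R u"

definition line :: "real^2 \<Rightarrow> real^2 \<Rightarrow> (real^2) set" where
  "line p u = range (line_param p u)"

definition line_borel :: "real^2 \<Rightarrow> real^2 \<Rightarrow> (real^2) set set" where
  "line_borel p u = {B. B \<subseteq> line p u \<and> line_param p u -` B \<in> sets borel}"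

definition line_null :: "real^2 \<Rightarrow> real^2 \<Rightarrow> (real^2) set \<Rightarrow> bool" where
  "line_null p u B \<longleftrightarrow> line_param p u -` B \<in> null_sets lebesgue"

definition line_meager :: "real^2 \<Rightarrow> real^2 \<Rightarrow> (real^2) set \<Rightarrow> bool" where
  "line_meager p u B \<longleftrightarrow> meager (line_param p u -` B :: real set)"

definition orth_proj :: "real^2 \<Rightarrow> real^2 \<Rightarrow> real^2 \<Rightarrow> real^2" where
  "orth_proj p u x = p + ((x - p) \<bullet> u) *\<^sub>R u"

end

theory Submission
  imports Defs
begin

definition small :: "'a set \<Rightarrow> bool" where
  "small X \<longleftrightarrow> ordLess2 (card_of X) (card_of (UNIV :: real set))"

lemma infinite_UNIV_real: "infinite (UNIV :: real set)"
  using infinite_UNIV_char_0 by blast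

lemma small_subset: "X \<subseteq> Y \<Longrightarrow> small Y \<Longrightarrow> small X"
  unfolding small_def using card_of_mono1 ordLeq_ordLess_trans by blast

lemma small_Un: "small X \<Longrightarrow> small Y \<Longrightarrow> small (X \<union> Y)"
  unfolding small_def using card_of_Un_ordLess_infinite infinite_UNIV_real by blast

lemma small_finite: "finite X \<Longrightarrow> small X"
  unfolding small_def
  by (rule finite_ordLess_infinite[OF card_of_Well_order card_of_Well_order])
     (auto simp: Field_card_of infinite_UNIV_real)

lemma small_insert: "small X \<Longrightarrow> small (insert a X)"
  using small_Un[of "{a}" X] small_finite by auto

lemma small_image: "small X \<Longrightarrow> small (f ` X)"
  unfolding small_def using card_of_image ordLeq_ordLess_trans by blast

lemma small_vimage_inj: assumes "inj f" "small S" shows "small (f -` S)"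
proof -
  have "ordLeq3 (card_of (f -` S)) (card_of S)"
    using assms(1) by (intro iffD1[OF card_of_ordLeq]) (auto intro: inj_on_subset)
  then show ?thesis using assms(2) unfolding small_def using ordLeq_ordLess_trans by blast
qed

lemma not_small_interval:
  fixes a b :: real
  assumes "a < b" "\<And>x. a < x \<Longrightarrow> x < b \<Longrightarrow> x \<in> X"
  shows "\<not> small X"
proof
  assume "small X"
  have "X \<approx> (UNIV::real set)" by (rule eqpoll_real_subset[OF assms])
  then have "ordIso2 (card_of X) (card_of (UNIV::real set))"
    by (simp add: eqpoll_iff_card_of_ordIso)
  with \<open>small X\<close> show False unfolding small_def using not_ordLess_ordIso by auto
qed

lemma not_small_UNIV_real: "\<not> small (UNIV :: real set)"
  by (rule not_small_interval[of 0 1]) auto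

lemma not_small_avoid: "\<not> small C \<Longrightarrow> small T \<Longrightarrow> \<exists>t\<in>C. t \<notin> T"
proof (rule ccontr)
  assume "\<not> small C" "small T" "\<not> (\<exists>t\<in>C. t \<notin> T)"
  then have "C \<subseteq> T" by auto
  then have "small C" using \<open>small T\<close> by (rule small_subset)
  with \<open>\<not> small C\<close> show False by contradiction
qed

lemma small_UN_finite:
  assumes "small I" "\<And>i. i \<in> I \<Longrightarrow> finite (A i)"
  shows "small (\<Union>i\<in>I. A i)"
proof (cases "finite I")
  case True then show ?thesis using assms by (intro small_finite) auto
next
  case False
  have "ordLeq3 (card_of (\<Union>i\<in>I. A i)) (card_of I)"
  proof (rule card_of_UNION_ordLeq_infinite[OF False])
    show "ordLeq3 (card_of I) (card_of I)" by (simp add: card_of_refl ordIso_imp_ordLeq)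
    show "\<forall>i\<in>I. ordLeq3 (card_of (A i)) (card_of I)"
      using assms(2) False
      by (intro ballI ordLess_imp_ordLeq finite_ordLess_infinite[OF card_of_Well_order card_of_Well_order])
         (auto simp: Field_card_of)
  qed
  then show ?thesis using assms(1) unfolding small_def using ordLeq_ordLess_trans by blast
qed

lemma small_UN_le1:
  assumes "small L" "\<And>l x y. l \<in> L \<Longrightarrow> x \<in> Z l \<Longrightarrow> y \<in> Z l \<Longrightarrow> x = y"
  shows "small (\<Union>l\<in>L. Z l)"
proof -
  have "\<And>l. l \<in> L \<Longrightarrow> finite (Z l)"
  proof -
    fix l assume "l \<in> L"
    have "Z l \<subseteq> {SOME x. x \<in> Z l}"
    proof
      fix x assume x: "x \<in> Z l"
      then have "(SOME x. x \<in> Z l) \<in> Z l" by (rule someI)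
      then show "x \<in> {SOME x. x \<in> Z l}" using assms(2)[OF \<open>l \<in> L\<close> x] by simp
    qed
    then show "finite (Z l)" using finite_subset by blast
  qed
  then show ?thesis using small_UN_finite assms(1) by blast
qed

lemma small_Times: assumes "small X" shows "small (X \<times> X)"
proof (cases "finite X")
  case True then show ?thesis by (simp add: small_finite)
next
  case False
  then have "ordIso2 (card_of (X \<times> X)) (card_of X)" by (rule card_of_Times_same_infinite)
  then show ?thesis using assms unfolding small_def using ordIso_ordLess_trans by blast
qed

lemma inner2: "(x::real^2) \<bullet> y = x$1 * y$1 + x$2 * y$2"
  by (simp add: inner_vec_def sum_2)

lemma vec2_eq: "(x::real^2) = y \<longleftrightarrow> x$1 = y$1 \<and> x$2 = y$2"
  by (simp add: vec_eq_iff forall_2)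

definition Lines :: "(real^2) set set" where
  "Lines = {{x. x \<bullet> v = k} | v k. v \<noteq> 0}"

lemma perp_aux:
  fixes d1 d2 v1 v2 y1 y2 :: real
  assumes "d1 * v1 + d2 * v2 = 0" "v1 \<noteq> 0 \<or> v2 \<noteq> 0" "d1 \<noteq> 0 \<or> d2 \<noteq> 0"
  shows "y1 * v1 + y2 * v2 = 0 \<longleftrightarrow> d1 * y2 = d2 * y1"
proof
  assume h: "y1 * v1 + y2 * v2 = 0"
  have e1: "v1 * (d1 * y2 - d2 * y1) = y2 * (d1 * v1 + d2 * v2) - d2 * (y1 * v1+y2 * v2)" by algebra
  have e2: "v2 * (d1 * y2 - d2 * y1) = d1 * (y1 * v1+y2 * v2) - y1 * (d1 * v1 + d2 * v2)" by algebra
  have "d1 * y2 - d2 * y1 = 0" using e1 e2 h assms by auto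
  then show "d1 * y2 = d2 * y1" by simp
next
  assume c: "d1 * y2 = d2 * y1"
  have e1: "d1 * (y1 * v1 + y2 * v2) = y1 * (d1 * v1 + d2 * v2) + v2 * (d1 * y2 - d2 * y1)" by algebra
  have e2: "d2 * (y1 * v1 + y2 * v2) = y2 * (d1 * v1 + d2 * v2) - v1 * (d1 * y2 - d2 * y1)" by algebra
  show "y1 * v1 + y2 * v2 = 0" using e1 e2 c assms by auto
qed

lemma lines_meet:
  assumes "l1 \<in> Lines" "l2 \<in> Lines" "p \<in> l1" "q \<in> l1" "p \<in> l2" "q \<in> l2" "p \<noteq> q"
  shows "l1 = l2"
proof -
  obtain v k where l1: "l1 = {x. x \<bullet> v = k}" "v \<noteq> 0" using assms(1) unfolding Lines_def by auto
  obtain w m where l2: "l2 = {x. x \<bullet> w = m}" "w \<noteq> 0" using assms(2) unfolding Lines_def by auto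
  define d where "d = p - q"
  have d0: "d$1 \<noteq> 0 \<or> d$2 \<noteq> 0" using assms(7) unfolding d_def by (auto simp: vec2_eq)
  have v0: "v$1 \<noteq> 0 \<or> v$2 \<noteq> 0" using l1(2) by (auto simp: vec2_eq)
  have w0: "w$1 \<noteq> 0 \<or> w$2 \<noteq> 0" using l2(2) by (auto simp: vec2_eq)
  have "d \<bullet> v = 0" using assms(3,4) l1 unfolding d_def by (auto simp: inner_diff_left)
  then have dv: "d$1 * v$1 + d$2 * v$2 = 0" by (simp add: inner2)
  have "d \<bullet> w = 0" using assms(5,6) l2 unfolding d_def by (auto simp: inner_diff_left)
  then have dw: "d$1 * w$1 + d$2 * w$2 = 0" by (simp add: inner2)
  have pk: "p \<bullet> v = k" "p \<bullet> w = m" using assms(3,5) l1 l2 by auto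
  have "x \<bullet> v = k \<longleftrightarrow> x \<bullet> w = m" for x
  proof -
    define y where "y = x - p"
    have "x \<bullet> v = k \<longleftrightarrow> y \<bullet> v = 0"
      using pk unfolding y_def by (auto simp: inner_diff_left)
    also have "\<dots> \<longleftrightarrow> y$1 * v$1 + y$2 * v$2 = 0" by (simp add: inner2)
    also have "\<dots> \<longleftrightarrow> d$1 * y$2 = d$2 * y$1" by (rule perp_aux[OF dv v0 d0])
    also have "\<dots> \<longleftrightarrow> y$1 * w$1 + y$2 * w$2 = 0" by (rule perp_aux[OF dw w0 d0, symmetric])
    also have "\<dots> \<longleftrightarrow> y \<bullet> w = 0" by (simp add: inner2)
    also have "\<dots> \<longleftrightarrow> x \<bullet> w = m"
      using pk unfolding y_def by (auto simp: inner_diff_left)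
    finally show ?thesis .
  qed
  then show ?thesis using l1 l2 by auto
qed

definition perp2 :: "real^2 \<Rightarrow> real^2" where
  "perp2 u = (\<chi> i. if i = 1 then - u$2 else u$1)"

lemma perp2_comp: "perp2 u $ 1 = - u$2" "perp2 u $ 2 = u$1"
  by (simp_all add: perp2_def)

lemma perp2_inner: "perp2 u \<bullet> u = 0" "perp2 u \<bullet> perp2 u = u \<bullet> u"
  by (simp_all add: inner2 perp2_comp algebra_simps)

lemma line_in_Lines: "(v::real^2) \<noteq> 0 \<Longrightarrow> {x. x \<bullet> v = k} \<in> Lines"
  unfolding Lines_def by auto

lemma strip:
  fixes u :: "real^2"
  assumes u: "norm u = 1" and C: "\<not> small C" "C \<subseteq> {t. \<bar>t+s\<bar> < 1}"
    and T: "small T" and L: "small L" "L \<subseteq> Lines"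
  shows "\<exists>c. c \<in> cball 0 1 \<and> c \<bullet> u - s \<in> C \<and> c \<notin> T \<and> c \<notin> \<Union>L"
proof -
  have uu: "u \<bullet> u = 1" using u by (simp add: power2_norm_eq_inner[symmetric])
  have u0: "u \<noteq> 0" using u by auto
  define ell where "ell h = {x::real^2. x \<bullet> u = h}" for h
  have ellL: "ell h \<in> Lines" for h unfolding ell_def by (rule line_in_Lines[OF u0])
  have inj1: "inj (\<lambda>t. ell (t+s))"
  proof (rule injI)
    fix t t' assume "ell (t+s) = ell (t'+s)"
    moreover have "(t+s) *\<^sub>R u \<in> ell (t+s)" unfolding ell_def using uu by simp
    ultimately have "(t+s) *\<^sub>R u \<in> ell (t'+s)" by simp
    then show "t = t'" unfolding ell_def using uu by simp
  qed
  have "small ((\<lambda>t. ell (t+s)) -` L)" by (rule small_vimage_inj[OF inj1 L(1)])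
  then obtain t where t: "t \<in> C" "t \<notin> (\<lambda>t. ell (t+s)) -` L" using not_small_avoid[OF C(1)] by blast
  define h where "h = t + s"
  have h1: "\<bar>h\<bar> < 1" using t C(2) unfolding h_def by auto
  have hL: "ell h \<notin> L" using t unfolding h_def by auto
  define w where "w = perp2 u"
  have wu: "w \<bullet> u = 0" "u \<bullet> w = 0" "w \<bullet> w = 1" using perp2_inner[of u] uu unfolding w_def
    by (auto simp: inner_commute)
  have w0: "w \<noteq> 0" using wu by auto
  define q where "q r = h *\<^sub>R u + r *\<^sub>R w" for r
  have qu: "q r \<bullet> u = h" for r unfolding q_def using uu wu by (simp add: inner_add_left)
  have qell: "q r \<in> ell h" for r using qu unfolding ell_def by simp
  have qn: "q r \<bullet> q r = h * h + r * r" for r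
    unfolding q_def using uu wu by (simp add: inner_add_left inner_add_right algebra_simps)
  have injq: "inj q"
  proof (rule injI)
    fix r r' assume "q r = q r'"
    then have "(r - r') *\<^sub>R w = 0" unfolding q_def by (simp add: algebra_simps)
    then show "r = r'" using w0 by simp
  qed
  define Bad where "Bad = q -` T \<union> (\<Union>l\<in>L. q -` l)"
  have sB: "small Bad" unfolding Bad_def
  proof (rule small_Un)
    show "small (q -` T)" by (rule small_vimage_inj[OF injq T])
    show "small (\<Union>l\<in>L. q -` l)"
    proof (rule small_UN_le1[OF L(1)])
      fix l r r' assume l: "l \<in> L" and r: "r \<in> q -` l" and r': "r' \<in> q -` l"
      show "r = r'"
      proof (rule ccontr)
        assume "r \<noteq> r'"
        then have "q r \<noteq> q r'" using injq by (auto dest: injD)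
        then have "l = ell h" using lines_meet[OF L(2)[THEN subsetD, OF l] ellL] r r' qell by blast
        then show False using hL l by simp
      qed
    qed
  qed
  define del where "del = 1 - \<bar>h\<bar>"
  have del0: "0 < del" using h1 unfolding del_def by simp
  have "\<not> small {r. - del < r \<and> r < del}" by (rule not_small_interval[of "-del" del]) (use del0 in auto)
  then obtain r where r: "- del < r" "r < del" "r \<notin> Bad" using not_small_avoid[OF _ sB] by blast
  have "\<bar>r\<bar> < del" using r by auto
  then have "\<bar>h\<bar> + \<bar>r\<bar> < 1" unfolding del_def by simp
  then have "(\<bar>h\<bar> + \<bar>r\<bar>)^2 \<le> 1^2" by (intro power_mono) auto
  then have "h * h + r * r \<le> 1" by (simp add: power2_eq_square algebra_simps abs_mult_self_eq)
         (smt (verit, ccfv_threshold) abs_ge_zero mult_nonneg_nonneg)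
  then have "norm (q r) ^2 \<le> 1^2" by (simp add: power2_norm_eq_inner qn)
  then have "norm (q r) \<le> 1" by (rule power2_le_imp_le) simp
  moreover have "q r \<bullet> u - s \<in> C" using qu t unfolding h_def by simp
  moreover have "q r \<notin> T" "q r \<notin> \<Union>L" using r unfolding Bad_def by auto
  ultimately show ?thesis by auto
qed

definition spec where
  "spec bigP bigL W R I Q Ls I' Q' Ls' \<longleftrightarrow>
     finite I' \<and> finite Q' \<and> finite Ls' \<and> Ls' \<subseteq> Lines \<and> I' \<subseteq> cball (0::real^2) 1 \<and>
     I' \<inter> (Q \<union> Q') = {} \<and> I' \<inter> \<Union>(Ls \<union> Ls') = {} \<and> Q' \<inter> I = {} \<and> \<Union>Ls' \<inter> I = {} \<and>
     (bigP W \<and> W \<subseteq> cball 0 1 \<longrightarrow> I' \<inter> W \<noteq> {} \<and> Q' \<inter> W \<noteq> {}) \<and>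
     (\<forall>u s C. R = (u, s, C) \<and> norm u = 1 \<and> bigL C \<and> C \<subseteq> {t. \<bar>t+s\<bar> < 1} \<longrightarrow>
         (\<exists>c\<in>I'. c \<bullet> u - s \<in> C) \<and> (\<exists>t\<in>C. {y. y \<bullet> u = t+s} \<in> Ls'))"

lemma stage:
  fixes bigP :: "(real^2) set \<Rightarrow> bool" and bigL :: "real set \<Rightarrow> bool"
  assumes bigP: "\<And>W P L. bigP W \<Longrightarrow> small P \<Longrightarrow> small L \<Longrightarrow> L \<subseteq> Lines \<Longrightarrow> \<exists>x\<in>W. x \<notin> P \<and> x \<notin> \<Union>L"
    and bigL: "\<And>C. bigL C \<Longrightarrow> \<not> small C"
    and sm: "small I" "small Q" "small Ls" "Ls \<subseteq> Lines"
  shows "\<exists>I' Q' Ls'. spec bigP bigL W R I Q Ls I' Q' Ls'"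
proof -
  obtain I1 Q1 where p1: "finite I1" "finite Q1" "I1 \<subseteq> cball 0 1" "I1 \<inter> Q = {}" "I1 \<inter> \<Union>Ls = {}"
    "I1 \<inter> Q1 = {}" "Q1 \<inter> I = {}" "bigP W \<and> W \<subseteq> cball 0 1 \<longrightarrow> I1 \<inter> W \<noteq> {} \<and> Q1 \<inter> W \<noteq> {}"
  proof (cases "bigP W \<and> W \<subseteq> cball 0 1")
    case True
    obtain a where a: "a \<in> W" "a \<notin> Q" "a \<notin> \<Union>Ls" using bigP[of W Q Ls] True sm by blast
    have "small (insert a I)" using sm by (intro small_insert)
    then obtain b where b: "b \<in> W" "b \<notin> insert a I"
      using bigP[of W "insert a I" "{}"] True small_finite[of "{}"] by auto
    show ?thesis by (rule that[of "{a}" "{b}"]) (use a b True in auto)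
  next
    case False
    show ?thesis by (rule that[of "{}" "{}"]) (use False in auto)
  qed
  obtain u s C where R: "R = (u, s, C)" by (cases R) auto
  show ?thesis
  proof (cases "norm u = 1 \<and> bigL C \<and> C \<subseteq> {t. \<bar>t+s\<bar> < 1}")
    case True
    have sI2: "small (I \<union> I1)" using small_Un[OF sm(1) small_finite[OF p1(1)]] .
    have "small ((\<lambda>y. y \<bullet> u - s) ` (I \<union> I1))" using sI2 by (rule small_image)
    moreover have nC: "\<not> small C" using bigL[of C] True by simp
    ultimately obtain t0 where t0: "t0 \<in> C" "t0 \<notin> (\<lambda>y. y \<bullet> u - s) ` (I \<union> I1)"
      using not_small_avoid[of C] by blast
    define ell where "ell = {y::real^2. y \<bullet> u = t0 + s}"
    have u0: "u \<noteq> 0" using True by auto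
    have ellL: "ell \<in> Lines" unfolding ell_def by (rule line_in_Lines[OF u0])
    have ellI: "ell \<inter> (I \<union> I1) = {}"
    proof (rule ccontr)
      assume "ell \<inter> (I \<union> I1) \<noteq> {}"
      then obtain y where y: "y \<in> ell" "y \<in> I \<union> I1" by blast
      then have "t0 = y \<bullet> u - s" unfolding ell_def by simp
      then have "t0 \<in> (\<lambda>y. y \<bullet> u - s) ` (I \<union> I1)" using y(2) by blast
      then show False using t0(2) by contradiction
    qed
    have sT: "small (Q \<union> Q1)" using small_Un[OF sm(2) small_finite[OF p1(2)]] .
    have sL: "small (insert ell Ls)" using sm by (intro small_insert)
    have LL: "insert ell Ls \<subseteq> Lines" using sm ellL by auto
    have "\<exists>c. c \<in> cball 0 1 \<and> c \<bullet> u - s \<in> C \<and> c \<notin> Q \<union> Q1 \<and> c \<notin> \<Union>(insert ell Ls)"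
      by (rule strip[OF _ nC _ sT sL LL]) (use True in auto)
    then obtain c where c: "c \<in> cball 0 1" "c \<bullet> u - s \<in> C" "c \<notin> Q \<union> Q1" "c \<notin> \<Union>(insert ell Ls)"
      by blast
    have "spec bigP bigL W R I Q Ls (insert c I1) Q1 {ell}"
      unfolding spec_def
    proof (intro conjI)
      show "finite (insert c I1)" "finite Q1" "finite {ell}" "{ell} \<subseteq> Lines"
        using p1 ellL by auto
      show "insert c I1 \<subseteq> cball 0 1" using c p1 by auto
      show "insert c I1 \<inter> (Q \<union> Q1) = {}" using c p1 by auto
      show "insert c I1 \<inter> \<Union>(Ls \<union> {ell}) = {}" using c p1 ellI by auto
      show "Q1 \<inter> I = {}" using p1 by auto
      show "\<Union>{ell} \<inter> I = {}" using ellI by auto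
      show "bigP W \<and> W \<subseteq> cball 0 1 \<longrightarrow> insert c I1 \<inter> W \<noteq> {} \<and> Q1 \<inter> W \<noteq> {}" using p1 by auto
      show "\<forall>u' s' C'. R = (u', s', C') \<and> norm u' = 1 \<and> bigL C' \<and> C' \<subseteq> {t. \<bar>t+s'\<bar> < 1} \<longrightarrow>
         (\<exists>c'\<in>insert c I1. c' \<bullet> u' - s' \<in> C') \<and> (\<exists>t\<in>C'. {y. y \<bullet> u' = t+s'} \<in> {ell})"
      proof (intro allI impI)
        fix u' s' C' assume h: "R = (u', s', C') \<and> norm u' = 1 \<and> bigL C' \<and> C' \<subseteq> {t. \<bar>t+s'\<bar> < 1}"
        then have e: "u' = u" "s' = s" "C' = C" unfolding R by auto
        have "\<exists>c'\<in>insert c I1. c' \<bullet> u - s \<in> C" using c(2) by blast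
        moreover have "\<exists>t\<in>C. {y. y \<bullet> u = t+s} \<in> {ell}" using t0(1) unfolding ell_def by blast
        ultimately show "(\<exists>c'\<in>insert c I1. c' \<bullet> u' - s' \<in> C') \<and> (\<exists>t\<in>C'. {y. y \<bullet> u' = t+s'} \<in> {ell})"
          unfolding e by blast
      qed
    qed
    then show ?thesis by blast
  next
    case False
    have "spec bigP bigL W R I Q Ls I1 Q1 {}"
      unfolding spec_def using p1 False R by auto
    then show ?thesis by blast
  qed
qed

lemma construction:
  fixes bigP :: "(real^2) set \<Rightarrow> bool" and bigL :: "real set \<Rightarrow> bool"
    and g1 :: "real \<Rightarrow> (real^2) set" and g2 :: "real \<Rightarrow> (real^2) \<times> real \<times> real set"
  assumes bigP: "\<And>W P L. bigP W \<Longrightarrow> small P \<Longrightarrow> small L \<Longrightarrow> L \<subseteq> Lines \<Longrightarrow> \<exists>x\<in>W. x \<notin> P \<and> x \<notin> \<Union>L"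
    and bigL: "\<And>C. bigL C \<Longrightarrow> \<not> small C"
    and g1: "\<And>W. bigP W \<Longrightarrow> W \<subseteq> cball 0 1 \<Longrightarrow> \<exists>x. g1 x = W"
    and g2: "\<And>u s C. bigL C \<Longrightarrow> \<exists>x. g2 x = (u, s, C)"
  shows "\<exists>A. A \<subseteq> cball 0 1 \<and> (\<forall>W. bigP W \<and> W \<subseteq> cball 0 1 \<longrightarrow> A \<inter> W \<noteq> {} \<and> W - A \<noteq> {}) \<and>
     (\<forall>u s C. norm u = 1 \<and> bigL C \<and> C \<subseteq> {t. \<bar>t+s\<bar> < 1} \<longrightarrow>
        (\<exists>x\<in>A. x \<bullet> u - s \<in> C) \<and> (\<exists>t\<in>C. \<forall>x\<in>A. x \<bullet> u - s \<noteq> t))"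
proof -
  define r0 where "r0 = card_of (UNIV :: real set)"
  have CO: "Card_order r0" unfolding r0_def by (rule card_of_Card_order)
  have WO: "wo_rel r0" unfolding r0_def wo_rel_def by (rule card_of_Well_order)
  have FI: "Field r0 = UNIV" unfolding r0_def by (rule Field_card_of)
  have sU: "small (underS r0 x)" for x
    using card_of_underS[OF CO, of x] FI unfolding small_def r0_def by simp
  define SP where "SP x = spec bigP bigL (g1 x) (g2 x)" for x
  define H where "H f x = (let I = (\<Union>y\<in>underS r0 x. fst (f y));
                               Q = (\<Union>y\<in>underS r0 x. fst (snd (f y)));
                               Ls = (\<Union>y\<in>underS r0 x. snd (snd (f y)))
                           in SOME z. SP x I Q Ls (fst z) (fst (snd z)) (snd (snd z)))"
    for f :: "real \<Rightarrow> (real^2) set \<times> (real^2) set \<times> (real^2) set set" and x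
  have adm: "wo_rel.adm_wo r0 H"
    unfolding wo_rel.adm_wo_def[OF WO]
  proof (intro allI impI)
    fix f g :: "real \<Rightarrow> (real^2) set \<times> (real^2) set \<times> (real^2) set set" and x
    assume "\<forall>y\<in>underS r0 x. f y = g y"
    then have "(\<Union>y\<in>underS r0 x. fst (f y)) = (\<Union>y\<in>underS r0 x. fst (g y))"
      "(\<Union>y\<in>underS r0 x. fst (snd (f y))) = (\<Union>y\<in>underS r0 x. fst (snd (g y)))"
      "(\<Union>y\<in>underS r0 x. snd (snd (f y))) = (\<Union>y\<in>underS r0 x. snd (snd (g y)))"
      by auto
    then show "H f x = H g x" unfolding H_def by simp
  qed
  define F where "F = wo_rel.worec r0 H"
  have Fx: "F x = H F x" for x unfolding F_def using wo_rel.worec_fixpoint[OF WO adm] by metis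
  define I where "I x = fst (F x)" for x
  define Q where "Q x = fst (snd (F x))" for x
  define L where "L x = snd (snd (F x))" for x
  define aI where "aI x = (\<Union>y\<in>underS r0 x. I y)" for x
  define aQ where "aQ x = (\<Union>y\<in>underS r0 x. Q y)" for x
  define aL where "aL x = (\<Union>y\<in>underS r0 x. L y)" for x
  have Hx: "F x = (SOME z. SP x (aI x) (aQ x) (aL x) (fst z) (fst (snd z)) (snd (snd z)))" for x
    using Fx[of x] unfolding H_def aI_def aQ_def aL_def I_def Q_def L_def Let_def by simp
  have main: "SP x (aI x) (aQ x) (aL x) (I x) (Q x) (L x)" for x
  proof (rule wo_rel.well_order_induct[OF WO, of _ x])
    fix x
    assume IH: "\<forall>y. y \<noteq> x \<and> (y, x) \<in> r0 \<longrightarrow> SP y (aI y) (aQ y) (aL y) (I y) (Q y) (L y)"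
    have IHu: "SP y (aI y) (aQ y) (aL y) (I y) (Q y) (L y)" if "y \<in> underS r0 x" for y
      using IH that unfolding underS_def by auto
    have fin: "finite (I y)" "finite (Q y)" "finite (L y)" "L y \<subseteq> Lines" if "y \<in> underS r0 x" for y
      using IHu[OF that] unfolding SP_def spec_def by auto
    have s1: "small (aI x)" unfolding aI_def by (rule small_UN_finite[OF sU fin(1)])
    have s2: "small (aQ x)" unfolding aQ_def by (rule small_UN_finite[OF sU fin(2)])
    have s3: "small (aL x)" unfolding aL_def by (rule small_UN_finite[OF sU fin(3)])
    have s4: "aL x \<subseteq> Lines" unfolding aL_def using fin(4) by auto
    obtain I' Q' L' where "spec bigP bigL (g1 x) (g2 x) (aI x) (aQ x) (aL x) I' Q' L'"
      using stage[OF bigP bigL s1 s2 s3 s4] by blast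
    then have "\<exists>z. SP x (aI x) (aQ x) (aL x) (fst z) (fst (snd z)) (snd (snd z))"
      unfolding SP_def by (intro exI[of _ "(I', Q', L')"]) simp
    then have "SP x (aI x) (aQ x) (aL x) (fst (F x)) (fst (snd (F x))) (snd (snd (F x)))"
      unfolding Hx by (rule someI_ex)
    then show "SP x (aI x) (aQ x) (aL x) (I x) (Q x) (L x)" unfolding I_def Q_def L_def .
  qed
  have disj: "I x \<inter> Q y = {} \<and> I x \<inter> \<Union>(L y) = {}" for x y
  proof -
    have tot: "(x, y) \<in> r0 \<or> (y, x) \<in> r0" using wo_rel.TOTALS[OF WO] FI by auto
    consider "x = y" | "y \<in> underS r0 x" | "x \<in> underS r0 y"
      using tot unfolding underS_def by auto
    then show ?thesis
    proof cases
      case 1 then show ?thesis using main[of x] unfolding SP_def spec_def by auto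
    next
      case 2
      have a: "Q y \<subseteq> aQ x" "L y \<subseteq> aL x" using 2 unfolding aQ_def aL_def by auto
      have b: "I x \<inter> aQ x = {}" "I x \<inter> \<Union>(aL x) = {}" using main[of x] unfolding SP_def spec_def by auto
      have c: "\<Union>(L y) \<subseteq> \<Union>(aL x)" using a(2) by (rule Union_mono)
      show ?thesis using a(1) b c by blast
    next
      case 3
      have a: "I x \<subseteq> aI y" using 3 unfolding aI_def by auto
      have b: "Q y \<inter> aI y = {}" "\<Union>(L y) \<inter> aI y = {}" using main[of y] unfolding SP_def spec_def by auto
      show ?thesis using a b by blast
    qed
  qed
  define A where "A = (\<Union>x. I x)"
  have "I x \<subseteq> cball 0 1" for x using main[of x] unfolding SP_def spec_def by blast
  then have AD: "A \<subseteq> cball 0 1" unfolding A_def by blast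
  have AQ: "A \<inter> Q y = {}" for y unfolding A_def using disj by auto
  have AL: "A \<inter> \<Union>(L y) = {}" for y unfolding A_def using disj by blast
  have r1: "A \<inter> W \<noteq> {} \<and> W - A \<noteq> {}" if hW: "bigP W" "W \<subseteq> cball 0 1" for W
  proof -
    obtain x where x: "g1 x = W" using g1[OF hW] by blast
    have "I x \<inter> W \<noteq> {}" "Q x \<inter> W \<noteq> {}" using main[of x] hW unfolding SP_def spec_def x by auto
    then obtain a b where ab: "a \<in> I x" "a \<in> W" "b \<in> Q x" "b \<in> W" by blast
    have "a \<in> A" using ab(1) unfolding A_def by blast
    moreover have "b \<notin> A" using AQ[of x] ab(3) by blast
    ultimately show ?thesis using ab by blast
  qed
  have r2: "(\<exists>x\<in>A. x \<bullet> u - s \<in> C) \<and> (\<exists>t\<in>C. \<forall>x\<in>A. x \<bullet> u - s \<noteq> t)"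
    if hC: "norm u = 1" "bigL C" "C \<subseteq> {t. \<bar>t+s\<bar> < 1}" for u s C
  proof -
    obtain x where x: "g2 x = (u, s, C)" using g2[OF hC(2)] by blast
    have "(\<exists>c\<in>I x. c \<bullet> u - s \<in> C) \<and> (\<exists>t\<in>C. {y. y \<bullet> u = t+s} \<in> L x)"
      using main[of x] hC x unfolding SP_def spec_def by blast
    then obtain c t where c: "c \<in> I x" "c \<bullet> u - s \<in> C" and t: "t \<in> C" "{y. y \<bullet> u = t+s} \<in> L x"
      by blast
    have "c \<in> A" using c unfolding A_def by blast
    moreover have "\<forall>y\<in>A. y \<bullet> u - s \<noteq> t"
    proof
      fix y assume "y \<in> A"
      then have "y \<notin> {y. y \<bullet> u = t+s}" using AL[of x] t(2) by blast
      then show "y \<bullet> u - s \<noteq> t" by auto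
    qed
    ultimately show ?thesis using c(2) t(1) by blast
  qed
  have R1: "\<forall>W. bigP W \<and> W \<subseteq> cball 0 1 \<longrightarrow> A \<inter> W \<noteq> {} \<and> W - A \<noteq> {}"
    using r1 by simp
  have R2: "\<forall>u s C. norm u = 1 \<and> bigL C \<and> C \<subseteq> {t. \<bar>t+s\<bar> < 1} \<longrightarrow>
        (\<exists>x\<in>A. x \<bullet> u - s \<in> C) \<and> (\<exists>t\<in>C. \<forall>x\<in>A. x \<bullet> u - s \<noteq> t)"
    using r2 by simp
  show ?thesis using AD R1 R2 by (intro exI[of _ A]) simp
qed

lemma nowhere_dense_empty: "nowhere_dense {}"
  unfolding nowhere_dense_def by simp

lemma meager_empty: "meager {}"
  unfolding meager_def using nowhere_dense_empty by (intro exI[of _ "\<lambda>_. {}"]) auto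

lemma meager_subset: "S \<subseteq> T \<Longrightarrow> meager T \<Longrightarrow> meager S"
  unfolding meager_def by blast

lemma meager_UN:
  fixes S :: "nat \<Rightarrow> 'a::topological_space set"
  assumes "\<And>n. meager (S n)" shows "meager (\<Union>n. S n)"
proof -
  have "\<forall>n. \<exists>F. (\<forall>k. nowhere_dense (F (k::nat))) \<and> S n \<subseteq> (\<Union>k. F k)"
  proof
    fix n show "\<exists>F. (\<forall>k. nowhere_dense (F (k::nat))) \<and> S n \<subseteq> (\<Union>k. F k)"
      using assms[of n] unfolding meager_def .
  qed
  then have "\<exists>FF. \<forall>n. (\<forall>k. nowhere_dense (FF n (k::nat))) \<and> S n \<subseteq> (\<Union>k. FF n k)" by (rule choice)
  then obtain FF where FF: "\<And>n. (\<forall>k. nowhere_dense (FF n (k::nat))) \<and> S n \<subseteq> (\<Union>k. FF n k)"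
    by blast
  define G where "G m = FF (fst (prod_decode m)) (snd (prod_decode m))" for m
  have "\<forall>m. nowhere_dense (G m)" unfolding G_def using FF by simp
  moreover have "(\<Union>n. S n) \<subseteq> (\<Union>m. G m)"
  proof
    fix x assume "x \<in> (\<Union>n. S n)"
    then obtain n where "x \<in> S n" by blast
    then obtain k where "x \<in> FF n k" using FF by blast
    then have "x \<in> G (prod_encode (n, k))" unfolding G_def by simp
    then show "x \<in> (\<Union>m. G m)" by blast
  qed
  ultimately show ?thesis unfolding meager_def by (intro exI[of _ G]) simp
qed

lemma meager_Un: "meager S \<Longrightarrow> meager T \<Longrightarrow> meager (S \<union> T)"
proof -
  assume a: "meager S" "meager T"
  have m: "meager (\<Union>n. (if (n::nat) = 0 then S else T))"
    by (rule meager_UN[of "\<lambda>n. if (n::nat) = 0 then S else T"]) (simp add: a)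
  have "S \<union> T \<subseteq> (\<Union>n. (if (n::nat) = 0 then S else T))"
  proof
    fix x assume "x \<in> S \<union> T"
    then show "x \<in> (\<Union>n. (if (n::nat) = 0 then S else T))"
    proof
      assume "x \<in> S" then show ?thesis by (intro UN_I[of 0]) auto
    next
      assume "x \<in> T" then show ?thesis by (intro UN_I[of 1]) auto
    qed
  qed
  then show ?thesis using m by (rule meager_subset)
qed

lemma meager_singleton: "meager {a::'a::{t1_space,perfect_space}}"
  unfolding meager_def nowhere_dense_def
  by (intro exI[of _ "\<lambda>_. {a}"]) (auto simp: interior_singleton)

lemma meager_insert: "meager S \<Longrightarrow> meager (insert (a::'a::{t1_space,perfect_space}) S)"
  using meager_Un[OF meager_singleton[of a]] by simp

lemma meager_finite: "finite S \<Longrightarrow> meager (S::'a::{t1_space,perfect_space} set)"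
  by (induction S rule: finite_induct) (auto simp: meager_empty meager_insert)

definition bp :: "'a::topological_space set \<Rightarrow> bool" where
  "bp S \<longleftrightarrow> (\<exists>U. open U \<and> meager ((S - U) \<union> (U - S)))"

lemma frontier_open_nowhere_dense:
  assumes "open U" shows "nowhere_dense (closure U - U)"
proof -
  have cl: "closed (closure U - U)" using assms by (simp add: closed_Diff)
  have "interior (closure U - U) = {}"
  proof (rule ccontr)
    assume "interior (closure U - U) \<noteq> {}"
    then obtain x where x: "x \<in> interior (closure U - U)" by blast
    have o: "open (interior (closure U - U))" by simp
    have "interior (closure U - U) \<inter> closure U \<noteq> {}" using x interior_subset by blast
    then have "interior (closure U - U) \<inter> U \<noteq> {}" using open_Int_closure_eq_empty[OF o] by blast
    then show False using interior_subset by blast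
  qed
  moreover have "closure (closure U - U) = closure U - U" using cl by (rule closure_closed)
  ultimately show ?thesis unfolding nowhere_dense_def by simp
qed

lemma nowhere_dense_meager: "nowhere_dense S \<Longrightarrow> meager S"
  unfolding meager_def by (intro exI[of _ "\<lambda>_. S"]) auto

lemma bp_Compl:
  fixes S :: "'a::topological_space set"
  assumes "bp S" shows "bp (- S)"
proof -
  obtain U where U: "open U" "meager ((S - U) \<union> (U - S))" using assms unfolding bp_def by blast
  define U' where "U' = - closure U"
  have "open U'" unfolding U'_def by (intro open_Compl closed_closure)
  have sub: "((- S) - U') \<union> (U' - (- S)) \<subseteq> ((S - U) \<union> (U - S)) \<union> (closure U - U)"
    unfolding U'_def using closure_subset[of U] by blast
  have "meager (((S - U) \<union> (U - S)) \<union> (closure U - U))"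
    using meager_Un[OF U(2) nowhere_dense_meager[OF frontier_open_nowhere_dense[OF U(1)]]] .
  with sub have "meager (((- S) - U') \<union> (U' - (- S)))" by (rule meager_subset)
  then show ?thesis unfolding bp_def using \<open>open U'\<close> by (intro exI[of _ U']) simp
qed

lemma bp_UN:
  fixes S :: "nat \<Rightarrow> 'a::topological_space set"
  assumes "\<And>n. bp (S n)" shows "bp (\<Union>n. S n)"
proof -
  have "\<forall>n. \<exists>U. open U \<and> meager ((S n - U) \<union> (U - S n))" using assms unfolding bp_def by blast
  then have "\<exists>U. \<forall>n. open (U n) \<and> meager ((S n - U n) \<union> (U n - S n))" by (rule choice)
  then obtain U where U: "\<And>n. open (U n) \<and> meager ((S n - U n) \<union> (U n - S n))" by blast
  have "open (\<Union>n. U n)" using U by (intro open_UN) simp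
  have sub: "((\<Union>n. S n) - (\<Union>n. U n)) \<union> ((\<Union>n. U n) - (\<Union>n. S n)) \<subseteq> (\<Union>n. (S n - U n) \<union> (U n - S n))"
    by blast
  have "meager (\<Union>n. (S n - U n) \<union> (U n - S n))" using U by (intro meager_UN) simp
  with sub have "meager (((\<Union>n. S n) - (\<Union>n. U n)) \<union> ((\<Union>n. U n) - (\<Union>n. S n)))"
    by (rule meager_subset)
  then show ?thesis unfolding bp_def using \<open>open (\<Union>n. U n)\<close> by (intro exI[of _ "\<Union>n. U n"]) simp
qed

lemma borel_bp:
  fixes S :: "'a::topological_space set"
  assumes "S \<in> sets borel" shows "bp S"
proof -
  have "S \<in> sigma_sets UNIV {S. open S}" using assms by (simp add: sets_borel)
  then show ?thesis
  proof induction
    case (Basic a)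
    then show ?case unfolding bp_def using meager_empty by (intro exI[of _ a]) auto
  next
    case Empty
    then show ?case unfolding bp_def using meager_empty by (intro exI[of _ "{}"]) auto
  next
    case (Compl a)
    then show ?case using bp_Compl by (simp add: Compl_eq_Diff_UNIV[symmetric])
  next
    case (Union a)
    then show ?case by (intro bp_UN) simp
  qed
qed

definition gdelta_big :: "'a::topological_space set \<Rightarrow> bool" where
  "gdelta_big C \<longleftrightarrow> (\<exists>U \<V>. open U \<and> U \<noteq> {} \<and> countable \<V> \<and>
      (\<forall>V\<in>\<V>. open V \<and> closure V = UNIV) \<and> C = U \<inter> \<Inter>\<V>)"

lemma borel_nonmeager_gdelta:
  fixes S :: "'a::topological_space set"
  assumes "S \<in> sets borel" "\<not> meager S"
  shows "\<exists>C. C \<subseteq> S \<and> gdelta_big C"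
proof -
  obtain U where U: "open U" "meager ((S - U) \<union> (U - S))" using borel_bp[OF assms(1)] unfolding bp_def by blast
  obtain F :: "nat \<Rightarrow> 'a set" where F: "\<And>n. nowhere_dense (F n)" "(S - U) \<union> (U - S) \<subseteq> (\<Union>n. F n)"
    using U(2) unfolding meager_def by blast
  define V where "V n = - closure (F n)" for n :: nat
  have V: "open (V n)" "closure (V n) = UNIV" for n
    using F(1)[of n] unfolding V_def nowhere_dense_def by (auto simp: closure_complement)
  have "U \<noteq> {}"
  proof
    assume "U = {}"
    then have "S \<subseteq> (S - U) \<union> (U - S)" by blast
    then show False using meager_subset[OF _ U(2)] assms(2) by blast
  qed
  moreover have "U \<inter> \<Inter>(range V) \<subseteq> S"
  proof
    fix x assume x: "x \<in> U \<inter> \<Inter>(range V)"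
    show "x \<in> S"
    proof (rule ccontr)
      assume "x \<notin> S"
      then have "x \<in> (\<Union>n. F n)" using x F(2) by blast
      then obtain n where "x \<in> F n" by blast
      then have "x \<in> closure (F n)" using closure_subset by blast
      then show False using x unfolding V_def by blast
    qed
  qed
  moreover have "gdelta_big (U \<inter> \<Inter>(range V))"
    unfolding gdelta_big_def using U(1) \<open>U \<noteq> {}\<close> V
    by (intro exI[of _ U] exI[of _ "range V"]) auto
  ultimately show ?thesis by blast
qed

lemma baire_meet:
  fixes \<G> :: "'a::{real_normed_vector,heine_borel} set set"
  assumes "countable \<G>" "\<And>V. V \<in> \<G> \<Longrightarrow> open V \<and> closure V = UNIV" "open O'" "O' \<noteq> {}"
  shows "O' \<inter> \<Inter>\<G> \<noteq> {}"
proof -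
  have "UNIV \<subseteq> closure (\<Inter>\<G>)"
    by (rule Baire[of UNIV \<G>]) (use assms in \<open>auto simp: subtopology_UNIV\<close>)
  then have "closure (\<Inter>\<G>) = UNIV" by blast
  then show ?thesis using open_Int_closure_eq_empty[OF assms(3), of "\<Inter>\<G>"] assms(4) by simp
qed

lemma gdelta_big_not_small:
  fixes C :: "real set"
  assumes "gdelta_big C" shows "\<not> small C"
proof
  assume sC: "small C"
  obtain U \<V> where UV: "open U" "U \<noteq> {}" "countable \<V>" "\<And>V. V \<in> \<V> \<Longrightarrow> open V \<and> closure V = UNIV"
    "C = U \<inter> \<Inter>\<V>" using assms unfolding gdelta_big_def by blast
  obtain z where z: "z \<in> U" using UV(2) by blast
  obtain r where r: "r > 0" "ball z r \<subseteq> U" using UV(1) z open_contains_ball by blast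
  define Dif where "Dif = (\<lambda>(x, y). x - y) ` (C \<times> C)"
  have "small Dif" unfolding Dif_def by (intro small_image small_Times sC)
  moreover have "\<not> small {d. 0 < d \<and> d < r}" by (rule not_small_interval[of 0 r]) (use r in auto)
  ultimately obtain d where d: "0 < d" "d < r" "d \<notin> Dif" using not_small_avoid by blast
  define \<G> where "\<G> = \<V> \<union> ((\<lambda>V. (+) d ` V) ` \<V>)"
  have cG: "countable \<G>" unfolding \<G>_def using UV(3) by simp
  have oG: "open V \<and> closure V = UNIV" if hV: "V \<in> \<G>" for V
  proof (cases "V \<in> \<V>")
    case True then show ?thesis using UV(4) by blast
  next
    case False
    then obtain V0 where V0: "V0 \<in> \<V>" "V = (+) d ` V0" using hV unfolding \<G>_def by blast
    have "closure V = (+) d ` UNIV" unfolding V0(2) closure_translation using UV(4)[OF V0(1)] by simp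
    also have "\<dots> = UNIV" by (simp add: surj_def)
    finally show ?thesis using open_translation UV(4)[OF V0(1)] V0(2) by auto
  qed
  define O' where "O' = U \<inter> (+) d ` U"
  have "open O'" unfolding O'_def using UV(1) open_translation by blast
  moreover have "z + d/2 \<in> O'"
  proof -
    have "z + d/2 \<in> U" using r d by (intro subsetD[OF r(2)]) (auto simp: dist_norm)
    moreover have "z - d/2 \<in> U" using r d by (intro subsetD[OF r(2)]) (auto simp: dist_norm)
    then have "z + d/2 \<in> (+) d ` U" by (intro image_eqI[of _ _ "z - d/2"]) auto
    ultimately show ?thesis unfolding O'_def by blast
  qed
  ultimately have "O' \<inter> \<Inter>\<G> \<noteq> {}" using baire_meet[OF cG oG] by blast
  then obtain x where x: "x \<in> O'" "x \<in> \<Inter>\<G>" by blast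
  have "x \<in> C"
    using x UV(5) unfolding O'_def \<G>_def by blast
  moreover have "x - d \<in> C"
  proof -
    have "x - d \<in> U" using x(1) unfolding O'_def by auto
    moreover have "x - d \<in> V" if "V \<in> \<V>" for V
    proof -
      have "x \<in> (+) d ` V" using x(2) that unfolding \<G>_def by blast
      then show ?thesis by auto
    qed
    ultimately show ?thesis using UV(5) by blast
  qed
  ultimately have "d \<in> Dif" unfolding Dif_def by (intro image_eqI[of _ _ "(x, x - d)"]) auto
  then show False using d(3) by contradiction
qed

definition pt :: "real \<Rightarrow> real \<Rightarrow> real^2" where
  "pt a b = (\<chi> i. if i = 1 then a else b)"

lemma pt_nth[simp]: "pt a b $ 1 = a" "pt a b $ 2 = b"
  by (simp_all add: pt_def)

lemma pt_eta: "pt (x$1) (x$2) = x"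
  by (simp add: vec2_eq)

lemma pt_inj1: "inj (pt a)"
  by (rule injI) (metis pt_nth(2))

lemma pt_inj2: "inj (\<lambda>a. pt a b)"
  by (rule injI) (metis pt_nth(1))

lemma continuous_pt1: "continuous_on UNIV (\<lambda>a. pt a b)"
  unfolding pt_def
proof (intro continuous_on_vec_lambda)
  fix i :: 2 show "continuous_on UNIV (\<lambda>x. if i = 1 then x else b)"
    by (cases "i = 1") (simp_all add: continuous_on_id continuous_on_const)
qed

lemma continuous_pt2: "continuous_on UNIV (pt a)"
  unfolding pt_def
proof (intro continuous_on_vec_lambda)
  fix i :: 2 show "continuous_on UNIV (\<lambda>x. if i = 1 then a else x)"
    by (cases "i = 1") (simp_all add: continuous_on_id continuous_on_const)
qed

definition vert :: "real \<Rightarrow> (real^2) set" where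
  "vert a = {x. x \<bullet> pt 1 0 = a}"

lemma vert_Lines: "vert a \<in> Lines"
  unfolding vert_def
  by (rule line_in_Lines) (metis pt_nth(1) zero_index zero_neq_one)

lemma pt_vert: "pt a b \<in> vert a"
  unfolding vert_def by (simp add: inner2)

lemma inj_vert: "inj vert"
proof (rule injI)
  fix a a' assume "vert a = vert a'"
  then have "pt a 0 \<in> vert a'" using pt_vert[of a 0] by simp
  then show "a = a'" unfolding vert_def by (simp add: inner2)
qed

lemma gdelta_big_plane:
  fixes W :: "(real^2) set"
  assumes W: "gdelta_big W" and P: "small P" and L: "small L" "L \<subseteq> Lines"
  shows "\<exists>x\<in>W. x \<notin> P \<and> x \<notin> \<Union>L"
proof -
  obtain U \<V> where UV: "open U" "U \<noteq> {}" "countable \<V>" "\<And>V. V \<in> \<V> \<Longrightarrow> open V \<and> closure V = UNIV"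
    "W = U \<inter> \<Inter>\<V>" using W unfolding gdelta_big_def by blast
  obtain z where z: "z \<in> U" using UV(2) by blast
  obtain r where r: "r > 0" "ball z r \<subseteq> U" using UV(1) z open_contains_ball by blast
  define I where "I = ball (z$1) (r/2)"
  define J where "J = ball (z$2) (r/2)"
  have inU: "pt a b \<in> U" if "a \<in> I" "b \<in> J" for a b
  proof -
    have "norm (pt a b - z) \<le> \<bar>(pt a b - z)$1\<bar> + \<bar>(pt a b - z)$2\<bar>"
      using norm_le_l1_cart[of "pt a b - z"] by (simp add: sum_2)
    also have "\<dots> < r" using that unfolding I_def J_def
      by (simp add: dist_real_def abs_minus_commute)
    finally have "pt a b \<in> ball z r" by (simp add: dist_norm norm_minus_commute)
    then show ?thesis using r(2) by blast
  qed
  obtain \<B> :: "real set set" where B: "countable \<B>" "topological_basis \<B>"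
    using ex_countable_basis by blast
  define Bj where "Bj = {\<beta>\<in>\<B>. \<beta> \<subseteq> J \<and> \<beta> \<noteq> {}}"
  have cBj: "countable Bj" unfolding Bj_def using B(1) by simp
  define Vab where "Vab V \<beta> = {a. \<exists>y\<in>\<beta>. pt a y \<in> V}" for V \<beta>
  have oVab: "open (Vab V \<beta>)" if "open V" for V \<beta>
  proof -
    have "Vab V \<beta> = (\<Union>y\<in>\<beta>. (\<lambda>a. pt a y) -` V)" unfolding Vab_def by auto
    moreover have "open ((\<lambda>a. pt a y) -` V)" for y by (rule open_vimage[OF that continuous_pt1])
    ultimately show ?thesis by auto
  qed
  have dVab: "closure (Vab V \<beta>) = UNIV" if hVb: "V \<in> \<V>" "\<beta> \<in> Bj" for V \<beta>
  proof -
    have "a \<in> closure (Vab V \<beta>)" for a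
      unfolding closure_approachable
    proof (intro allI impI)
      fix e :: real assume e: "e > 0"
      define R :: "(real^2) set" where "R = (\<lambda>x. x$1) -` ball a e \<inter> (\<lambda>x. x$2) -` \<beta>"
      have ob: "open \<beta>" using hVb(2) B(2) unfolding Bj_def by (auto intro: topological_basis_open)
      have oR: "open R" unfolding R_def using ob by (intro open_Int open_vimage_vec_nth) auto
      obtain y where y: "y \<in> \<beta>" using hVb(2) unfolding Bj_def by blast
      have "pt a y \<in> R" unfolding R_def using y e by simp
      then have "R \<noteq> {}" by blast
      moreover have "R \<inter> closure V \<noteq> {}" using \<open>pt a y \<in> R\<close> UV(4)[OF hVb(1)] by blast
      then have "R \<inter> V \<noteq> {}" using open_Int_closure_eq_empty[OF oR] by blast
      then obtain x where x: "x \<in> R" "x \<in> V" by blast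
      have "x$1 \<in> Vab V \<beta>" unfolding Vab_def using x unfolding R_def
        by (intro CollectI bexI[of _ "x$2"]) (auto simp: pt_eta)
      moreover have "dist (x$1) a < e" using x(1) unfolding R_def by (simp add: dist_commute)
      ultimately show "\<exists>a'\<in>Vab V \<beta>. dist a' a < e" by blast
    qed
    then show ?thesis by blast
  qed
  define \<G> where "\<G> = (\<lambda>(V, \<beta>). Vab V \<beta>) ` (\<V> \<times> Bj)"
  have "gdelta_big (I \<inter> \<Inter>\<G>)" unfolding gdelta_big_def
  proof (intro exI[of _ I] exI[of _ \<G>] conjI)
    show "open I" unfolding I_def by simp
    show "I \<noteq> {}" unfolding I_def using r(1) by simp
    show "countable \<G>" unfolding \<G>_def using UV(3) cBj by (intro countable_image countable_SIGMA) auto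
    show "\<forall>V\<in>\<G>. open V \<and> closure V = UNIV" unfolding \<G>_def using oVab dVab UV(4) by auto
  qed simp
  then have nG: "\<not> small (I \<inter> \<Inter>\<G>)" by (rule gdelta_big_not_small)
  have "small (vert -` L)" by (rule small_vimage_inj[OF inj_vert L(1)])
  then obtain a where a: "a \<in> I \<inter> \<Inter>\<G>" "a \<notin> vert -` L" using not_small_avoid[OF nG] by blast
  define \<S> where "\<S> = (\<lambda>V. {y. pt a y \<in> V} \<union> - closure J) ` \<V>"
  have "gdelta_big (J \<inter> \<Inter>\<S>)" unfolding gdelta_big_def
  proof (intro exI[of _ J] exI[of _ \<S>] conjI)
    show "open J" unfolding J_def by simp
    show "J \<noteq> {}" unfolding J_def using r(1) by simp
    show "countable \<S>" unfolding \<S>_def using UV(3) by simp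
    show "\<forall>V\<in>\<S>. open V \<and> closure V = UNIV"
    proof
      fix X assume "X \<in> \<S>"
      then obtain V where V: "V \<in> \<V>" "X = {y. pt a y \<in> V} \<union> - closure J" unfolding \<S>_def by blast
      have o1: "open {y. pt a y \<in> V}"
        using open_vimage[OF conjunct1[OF UV(4)[OF V(1)]] continuous_pt2[of a]] by (simp add: vimage_def)
      have "open X" unfolding V(2) using o1 by (intro open_Un open_Compl closed_closure)
      moreover have "J \<subseteq> closure {y. pt a y \<in> V}"
      proof
        fix y0 assume y0: "y0 \<in> J"
        show "y0 \<in> closure {y. pt a y \<in> V}"
          unfolding closure_approachable
        proof (intro allI impI)
          fix e :: real assume e: "e > 0"
          have "open (ball y0 e \<inter> J)" unfolding J_def by (intro open_Int open_ball)
          moreover have "y0 \<in> ball y0 e \<inter> J" using e y0 by simp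
          ultimately obtain \<beta> where \<beta>: "\<beta> \<in> \<B>" "y0 \<in> \<beta>" "\<beta> \<subseteq> ball y0 e \<inter> J"
            using topological_basisE[OF B(2)] by blast
          then have "\<beta> \<in> Bj" unfolding Bj_def by auto
          then have "a \<in> Vab V \<beta>" using a(1) V(1) unfolding \<G>_def by blast
          then obtain y where y: "y \<in> \<beta>" "pt a y \<in> V" unfolding Vab_def by blast
          have "dist y y0 < e" using y(1) \<beta>(3) by (auto simp: dist_commute)
          then show "\<exists>y'\<in>{y. pt a y \<in> V}. dist y' y0 < e" using y(2) by blast
        qed
      qed
      then have "closure J \<subseteq> closure {y. pt a y \<in> V}"
        by (metis closure_closure closure_mono)
      then have "closure X = UNIV" unfolding V(2) closure_Un using closure_subset[of "- closure J"] by blast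
      ultimately show "open X \<and> closure X = UNIV" by blast
    qed
  qed simp
  then have nS: "\<not> small (J \<inter> \<Inter>\<S>)" by (rule gdelta_big_not_small)
  define Bad where "Bad = pt a -` P \<union> (\<Union>l\<in>L. pt a -` l)"
  have sB: "small Bad" unfolding Bad_def
  proof (rule small_Un)
    show "small (pt a -` P)" by (rule small_vimage_inj[OF pt_inj1 P])
    show "small (\<Union>l\<in>L. pt a -` l)"
    proof (rule small_UN_le1[OF L(1)])
      fix l b b' assume l: "l \<in> L" and b: "b \<in> pt a -` l" and b': "b' \<in> pt a -` l"
      show "b = b'"
      proof (rule ccontr)
        assume "b \<noteq> b'"
        then have "pt a b \<noteq> pt a b'" using pt_inj1 by (auto dest: injD)
        then have "l = vert a"
          using lines_meet[OF L(2)[THEN subsetD, OF l] vert_Lines] b b' pt_vert by blast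
        then show False using a(2) l by simp
      qed
    qed
  qed
  obtain y where y: "y \<in> J \<inter> \<Inter>\<S>" "y \<notin> Bad" using not_small_avoid[OF nS sB] by blast
  have "pt a y \<in> U" using a(1) y(1) inU by blast
  moreover have "pt a y \<in> V" if "V \<in> \<V>" for V
  proof -
    have "y \<in> {y. pt a y \<in> V} \<union> - closure J" using y(1) that unfolding \<S>_def by blast
    moreover have "y \<in> closure J" using y(1) closure_subset by blast
    ultimately show ?thesis by blast
  qed
  ultimately have "pt a y \<in> W" unfolding UV(5) by blast
  moreover have "pt a y \<notin> P" "pt a y \<notin> \<Union>L" using y(2) unfolding Bad_def by auto
  ultimately show ?thesis by blast
qed

lemma small_inj_on: assumes "inj_on f A" "f ` A \<subseteq> C" "small C" shows "small A"
proof -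
  have "ordLeq3 (card_of A) (card_of C)"
    using card_of_ordLeq[THEN iffD1, OF exI[of _ f]] assms(1,2) by blast
  then show ?thesis using assms(3) unfolding small_def by (rule ordLeq_ordLess_trans)
qed

lemma closed_positive_not_small:
  fixes K :: "real set"
  assumes K: "closed K" "K \<subseteq> {-n..n}" "measure lborel K > 0"
  shows "\<not> small K"
proof
  assume sK: "small K"
  have bK: "bounded K" using K(2) bounded_subset[OF bounded_closed_interval] by blast
  define g where "g t = measure lborel (K \<inter> {..t})" for t
  have Kt_sets: "K \<inter> {..t} \<in> sets lborel" for t using K(1) by (simp add: closed_Int borel_closed)
  have Kt_fm: "K \<inter> {..t} \<in> fmeasurable lborel" for t
    using Kt_sets emeasure_bounded_finite[OF bounded_subset[OF bK]] by (intro fmeasurableI) auto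
  have glip: "g s \<le> g t + (s - t)" if "t \<le> s" for s t
  proof -
    have "K \<inter> {..s} \<subseteq> (K \<inter> {..t}) \<union> {t<..s}" by auto
    moreover have "(K \<inter> {..t}) \<union> {t<..s} \<in> fmeasurable lborel"
    proof (rule fmeasurableI)
      show "(K \<inter> {..t}) \<union> {t<..s} \<in> sets lborel" using Kt_sets[of t] by simp
      have b1: "bounded (K \<inter> {..t})" using bK by (rule bounded_subset) auto
      have b2: "bounded {t<..s}" by (rule bounded_subset[OF bounded_closed_interval[of t s]]) auto
      have "bounded ((K \<inter> {..t}) \<union> {t<..s})" using b1 b2 by (rule bounded_Un[THEN iffD2, OF conjI])
      then show "emeasure lborel ((K \<inter> {..t}) \<union> {t<..s}) < \<infinity>" by (rule emeasure_bounded_finite)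
    qed
    ultimately have "g s \<le> measure lborel ((K \<inter> {..t}) \<union> {t<..s})" unfolding g_def
      using Kt_sets[of s] by (intro measure_mono_fmeasurable) auto
    also have "\<dots> \<le> g t + measure lborel {t<..s}" unfolding g_def
      by (rule measure_Un_le) (use Kt_sets[of t] in simp_all)
    also have "measure lborel {t<..s} = s - t" using that by simp
    finally show ?thesis .
  qed
  have gmono: "g t \<le> g s" if "t \<le> s" for s t
    unfolding g_def using that by (intro measure_mono_fmeasurable Kt_sets Kt_fm) auto
  have gcont: "continuous_on UNIV g"
  proof (rule continuous_at_imp_continuous_on, intro ballI)
    fix x :: real
    show "isCont g x" unfolding continuous_at_eps_delta
    proof (intro allI impI)
      fix e :: real assume e: "e > 0"
      have hd: "dist (g y) (g x) < e" if "dist y x < e" for y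
      proof (cases "x \<le> y")
        case True then show ?thesis using glip[OF True] gmono[OF True] that
          unfolding dist_real_def abs_less_iff by linarith
      next
        case False then have "y \<le> x" by simp
        then show ?thesis using glip[OF \<open>y \<le> x\<close>] gmono[OF \<open>y \<le> x\<close>] that
          unfolding dist_real_def abs_less_iff by linarith
      qed
      show "\<exists>d>0. \<forall>y. dist y x < d \<longrightarrow> dist (g y) (g x) < e"
      proof (intro exI[of _ e] conjI allI impI)
        show "0 < e" by (rule e)
      next
        fix y assume "dist y x < e" then show "dist (g y) (g x) < e" by (rule hd)
      qed
    qed
  qed
  define m where "m = measure lborel K"
  have "K \<inter> {..n} = K" using K(2) by auto
  then have gn: "g n = m" unfolding g_def m_def by simp
  have glow: "g t = 0" if "t < -n" for t
  proof -
    have "K \<inter> {..t} = {}"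
    proof (rule ccontr)
      assume "K \<inter> {..t} \<noteq> {}"
      then obtain x where "x \<in> K" "x \<le> t" by auto
      then show False using K(2) that by auto
    qed
    then show ?thesis unfolding g_def by simp
  qed
  define tau where "tau y = Inf {t. y \<le> g t}" for y
  have tau: "g (tau y) = y \<and> tau y \<in> K" if y: "0 < y" "y < m" for y
  proof -
    define S where "S = {t. y \<le> g t}"
    have "n \<in> S" unfolding S_def using gn y by simp
    then have Sne: "S \<noteq> {}" by blast
    have Sbdd: "bdd_below S"
    proof (rule bdd_belowI[of _ "-n - 1"])
      fix t assume "t \<in> S"
      then have "y \<le> g t" unfolding S_def by simp
      then show "-n - 1 \<le> t" using glow[of t] y by (cases "t < -n") auto
    qed
    have Scl: "closed S" unfolding S_def
      by (rule closed_Collect_le[OF continuous_on_const gcont])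
    have tS: "tau y \<in> S" unfolding tau_def S_def[symmetric] by (rule closed_contains_Inf[OF Sne Sbdd Scl])
    have ge: "y \<le> g (tau y)" using tS unfolding S_def by simp
    have le: "g (tau y) \<le> y"
    proof (rule field_le_epsilon)
      fix e :: real assume e: "0 < e"
      have "tau y - e \<notin> S"
      proof
        assume "tau y - e \<in> S"
        then have "tau y \<le> tau y - e" unfolding tau_def S_def[symmetric] using cInf_lower[OF _ Sbdd] by blast
        then show False using e by simp
      qed
      then have "g (tau y - e) < y" unfolding S_def by simp
      moreover have "g (tau y) \<le> g (tau y - e) + e" using glip[of "tau y - e" "tau y"] e by simp
      ultimately show "g (tau y) \<le> y + e" by simp
    qed
    have inK: "tau y \<in> K"
    proof (rule ccontr)
      assume nK: "tau y \<notin> K"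
      have "open (- K)" using K(1) by auto
      then obtain e where e: "e > 0" "ball (tau y) e \<subseteq> - K" using nK open_contains_ball by blast
      have "K \<inter> {..tau y} = K \<inter> {..tau y - e/2}"
      proof (intro equalityI subsetI)
        fix x assume x: "x \<in> K \<inter> {..tau y}"
        have "x \<le> tau y - e/2"
        proof (rule ccontr)
          assume "\<not> x \<le> tau y - e/2"
          then have "x \<in> ball (tau y) e" using x e by (auto simp: dist_real_def)
          then show False using e(2) x by blast
        qed
        then show "x \<in> K \<inter> {..tau y - e/2}" using x by auto
      next
        fix x assume "x \<in> K \<inter> {..tau y - e/2}" then show "x \<in> K \<inter> {..tau y}" using e by auto
      qed
      then have "g (tau y - e/2) = g (tau y)" unfolding g_def by simp
      then have "tau y - e/2 \<in> S" using ge unfolding S_def by simp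
      then have "tau y \<le> tau y - e/2" unfolding tau_def S_def[symmetric] using cInf_lower[OF _ Sbdd] by blast
      then show False using e by simp
    qed
    show ?thesis using ge le inK by simp
  qed
  have "inj_on tau {0<..<m}"
  proof (rule inj_onI)
    fix y y' assume a: "y \<in> {0<..<m}" "y' \<in> {0<..<m}" "tau y = tau y'"
    have "g (tau y) = y" using tau[of y] a(1) by simp
    moreover have "g (tau y') = y'" using tau[of y'] a(2) by simp
    ultimately show "y = y'" using a(3) by metis
  qed
  moreover have "tau ` {0<..<m} \<subseteq> K"
  proof
    fix x assume "x \<in> tau ` {0<..<m}"
    then obtain y where "y \<in> {0<..<m}" "x = tau y" by blast
    then show "x \<in> K" using tau[of y] by simp
  qed
  ultimately have "small {0<..<m}" using sK by (rule small_inj_on)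
  moreover have "\<not> small {0<..<m}" by (rule not_small_interval[of 0 m]) (use K(3) m_def in auto)
  ultimately show False by contradiction
qed

lemma lebesgue_not_small:
  fixes C :: "real set"
  assumes C: "C \<in> sets lebesgue" "C \<notin> null_sets lebesgue"
  shows "\<not> small C"
proof
  assume sC: "small C"
  have "\<exists>n::nat. C \<inter> {-real n..real n} \<notin> null_sets lebesgue"
  proof (rule ccontr)
    assume "\<not> (\<exists>n::nat. C \<inter> {-real n..real n} \<notin> null_sets lebesgue)"
    then have h: "C \<inter> {-real n..real n} \<in> null_sets lebesgue" for n :: nat by blast
    have nU: "(\<Union>n. C \<inter> {-real n..real n}) \<in> null_sets lebesgue" using h by (intro null_sets_UN) 
    have sub: "C \<subseteq> (\<Union>n. C \<inter> {-real n..real n})"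
    proof
      fix x assume x: "x \<in> C"
      obtain n where n: "\<bar>x\<bar> \<le> of_nat n" using real_arch_simple by blast
      then have "x \<in> C \<inter> {-real n..real n}" using x by auto
      then show "x \<in> (\<Union>n. C \<inter> {-real n..real n})" by blast
    qed
    have "C \<in> null_sets lebesgue" using null_sets_subset[OF nU C(1) sub] .
    then show False using C(2) by contradiction
  qed
  then obtain n :: nat where n: "C \<inter> {-real n..real n} \<notin> null_sets lebesgue" by blast
  define S where "S = C \<inter> {-real n..real n}"
  have Sl: "S \<in> sets lebesgue" unfolding S_def
    using C(1) fmeasurableD[OF lmeasurable_interval(1)[of "-real n" "real n"]] by (rule sets.Int)
  have "bounded S" unfolding S_def
    by (rule bounded_subset[OF bounded_closed_interval[of "-real n" "real n"]]) auto
  then have Sm: "S \<in> lmeasurable" using Sl by (rule bounded_set_imp_lmeasurable)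
  define mu where "mu = measure lebesgue S"
  have emS: "emeasure lebesgue S = ennreal mu"
    unfolding mu_def using Sm by (intro emeasure_eq_ennreal_measure) (auto simp: fmeasurable_def)
  have mu0: "mu > 0"
  proof (rule ccontr)
    assume "\<not> mu > 0"
    then have "mu = 0" using measure_nonneg[of lebesgue S] unfolding mu_def by simp
    then have "S \<in> null_sets lebesgue" using emS Sl by (intro null_setsI) simp_all
    then show False using n unfolding S_def by simp
  qed
  obtain T where T: "closed T" "T \<subseteq> S" "S - T \<in> lmeasurable" "emeasure lebesgue (S - T) < ennreal (mu/2)"
    using sets_lebesgue_inner_closed[OF Sl, of "mu/2"] mu0 by auto
  have "emeasure lebesgue (S - T) = ennreal (measure lebesgue (S - T))"
    using T(3) by (intro emeasure_eq_ennreal_measure) (auto simp: fmeasurable_def)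
  then have mST: "measure lebesgue (S - T) < mu/2"
    using T(4) mu0 by (simp add: ennreal_less_iff)
  have Tl: "T \<in> sets lebesgue" using T(1) by (simp add: borel_closed)
  have "S = T \<union> (S - T)" using T(2) by blast
  then have "mu \<le> measure lebesgue T + measure lebesgue (S - T)" unfolding mu_def
    using measure_Un_le[OF Tl, of "S - T"] Sl Tl by (metis sets.Diff)
  then have mT: "measure lebesgue T > 0" using mST mu0 by simp
  have "measure lborel T = measure lebesgue T" using T(1) by (simp add: borel_closed)
  then have "measure lborel T > 0" using mT by simp
  moreover have "T \<subseteq> {-real n..real n}" using T(2) unfolding S_def by blast
  ultimately have "\<not> small T" using T(1) closed_positive_not_small by blast
  moreover have "small T" using small_subset[OF _ sC] T(2) unfolding S_def by blast
  ultimately show False by contradiction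
qed

lemma lborel_not_small:
  fixes C :: "real set"
  assumes "C \<in> sets borel" "emeasure lborel C \<noteq> 0"
  shows "\<not> small C"
proof (rule lebesgue_not_small)
  show "C \<in> sets lebesgue" using assms(1) by simp
  show "C \<notin> null_sets lebesgue"
    using assms null_sets_completion_iff[of C lborel] by (auto dest: null_setsD1)
qed

definition ptp :: "real \<times> real \<Rightarrow> real^2" where
  "ptp p = pt (fst p) (snd p)"

lemma continuous_ptp: "continuous_on UNIV ptp"
  unfolding ptp_def pt_def
proof (intro continuous_on_vec_lambda)
  fix i :: 2 show "continuous_on UNIV (\<lambda>x::real\<times>real. if i = 1 then fst x else snd x)"
    by (cases "i = 1") (simp_all add: continuous_on_fst continuous_on_snd continuous_on_id)
qed

lemma ptp_lip: "norm (ptp y - ptp x) \<le> 2 * norm (y - x)"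
proof -
  have e: "ptp y - ptp x = pt (fst (y - x)) (snd (y - x))" unfolding ptp_def by (simp add: vec2_eq)
  have "norm (ptp y - ptp x) \<le> \<bar>fst (y - x)\<bar> + \<bar>snd (y - x)\<bar>"
    using norm_le_l1_cart[of "ptp y - ptp x"] unfolding e by (simp add: sum_2)
  also have "\<bar>fst (y - x)\<bar> \<le> norm (y - x)"
    using norm_fst_le[of "fst (y - x)" "snd (y - x)"] unfolding prod.collapse by simp
  also have "\<bar>snd (y - x)\<bar> \<le> norm (y - x)"
    using norm_snd_le[of "snd (y - x)" "fst (y - x)"] unfolding prod.collapse by simp
  finally show ?thesis by simp
qed

lemma null_plane:
  fixes W :: "(real^2) set"
  assumes W: "closed W" "W \<notin> null_sets lebesgue" and P: "small P" and L: "small L" "L \<subseteq> Lines"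
  shows "\<exists>x\<in>W. x \<notin> P \<and> x \<notin> \<Union>L"
proof -
  define W' where "W' = ptp -` W"
  have W'c: "closed W'" unfolding W'_def by (rule closed_vimage[OF W(1) continuous_ptp])
  have W'b: "W' \<in> sets borel" using W'c by (rule borel_closed)
  have Wim: "W = ptp ` W'"
  proof (intro equalityI subsetI)
    fix x assume "x \<in> W"
    moreover have "ptp (x$1, x$2) = x" unfolding ptp_def by (simp add: pt_eta)
    ultimately show "x \<in> ptp ` W'" unfolding W'_def by (metis image_eqI vimageI)
  qed (auto simp: W'_def)
  have "W' \<notin> null_sets lebesgue"
  proof
    assume "W' \<in> null_sets lebesgue"
    then have "negligible W'" by (simp add: negligible_iff_null_sets)
    then have "negligible (ptp ` W')"
    proof (rule negligible_locally_Lipschitz_image[rotated])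
      fix x assume "x \<in> W'"
      show "\<exists>T B. open T \<and> x \<in> T \<and> (\<forall>y\<in>W' \<inter> T. norm (ptp y - ptp x) \<le> B * norm (y - x))"
        using ptp_lip by (intro exI[of _ UNIV] exI[of _ 2]) auto
    qed simp
    then show False using W(2) Wim by (simp add: negligible_iff_null_sets)
  qed
  then have eW': "emeasure lborel W' \<noteq> 0"
    using W'b null_sets_completion_iff[of W' lborel] by (auto intro: null_setsI)
  have "sets (lborel \<Otimes>\<^sub>M lborel) = sets (lborel :: (real \<times> real) measure)" by (simp only: lborel_prod)
  then have W'p: "W' \<in> sets (lborel \<Otimes>\<^sub>M lborel)" using W'b by (simp only: sets_lborel)
  have hm: "(\<lambda>a. emeasure lborel (Pair a -` W')) \<in> borel_measurable lborel"
    by (rule lborel.measurable_emeasure_Pair[OF W'p])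
  have "emeasure (lborel \<Otimes>\<^sub>M lborel) W' = (\<integral>\<^sup>+ a. emeasure lborel (Pair a -` W') \<partial>lborel)"
    by (rule lborel.emeasure_pair_measure_alt[OF W'p])
  then have "(\<integral>\<^sup>+ a. emeasure lborel (Pair a -` W') \<partial>lborel) \<noteq> 0" using eW' by (simp add: lborel_prod)
  then have nAE: "\<not> (AE a in lborel. emeasure lborel (Pair a -` W') = 0)"
    using nn_integral_0_iff_AE[OF hm] by simp
  define X where "X = {a. emeasure lborel (Pair a -` W') \<noteq> 0}"
  have Xs: "X \<in> sets borel"
  proof -
    have "X = (\<lambda>a. emeasure lborel (Pair a -` W')) -` (UNIV - {0}) \<inter> space lborel"
      unfolding X_def by auto
    also have "\<dots> \<in> sets lborel" using hm by (intro measurable_sets) auto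
    finally show ?thesis by simp
  qed
  have "X \<notin> null_sets lborel"
  proof
    assume "X \<in> null_sets lborel"
    moreover have "{x \<in> space lborel. \<not> emeasure lborel (Pair x -` W') = 0} = X" unfolding X_def by auto
    ultimately have "AE a in lborel. emeasure lborel (Pair a -` W') = 0"
      using AE_iff_null[of lborel "\<lambda>a. emeasure lborel (Pair a -` W') = 0"] Xs by simp
    then show False using nAE by contradiction
  qed
  then have "emeasure lborel X \<noteq> 0" using Xs by (auto intro: null_setsI)
  then have nX: "\<not> small X" using Xs by (intro lborel_not_small)
  have "small (vert -` L)" by (rule small_vimage_inj[OF inj_vert L(1)])
  then obtain a where a: "a \<in> X" "a \<notin> vert -` L" using not_small_avoid[OF nX] by blast
  define Sa where "Sa = Pair a -` W'"
  have Sa_eq: "Sa = {b. pt a b \<in> W}" unfolding Sa_def W'_def ptp_def by auto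
  have Sab: "Sa \<in> sets borel" unfolding Sa_eq
    using borel_closed[OF closed_vimage[OF W(1) continuous_pt2[of a]]] by (simp add: vimage_def)
  have nS: "\<not> small Sa" using Sab a(1) unfolding X_def Sa_def by (intro lborel_not_small) auto
  define Bad where "Bad = pt a -` P \<union> (\<Union>l\<in>L. pt a -` l)"
  have sB: "small Bad" unfolding Bad_def
  proof (rule small_Un)
    show "small (pt a -` P)" by (rule small_vimage_inj[OF pt_inj1 P])
    show "small (\<Union>l\<in>L. pt a -` l)"
    proof (rule small_UN_le1[OF L(1)])
      fix l b b' assume l: "l \<in> L" and b: "b \<in> pt a -` l" and b': "b' \<in> pt a -` l"
      show "b = b'"
      proof (rule ccontr)
        assume "b \<noteq> b'"
        then have "pt a b \<noteq> pt a b'" using pt_inj1 by (auto dest: injD)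
        then have "l = vert a"
          using lines_meet[OF L(2)[THEN subsetD, OF l] vert_Lines] b b' pt_vert by blast
        then show False using a(2) l by simp
      qed
    qed
  qed
  obtain b where b: "b \<in> Sa" "b \<notin> Bad" using not_small_avoid[OF nS sB] by blast
  have "pt a b \<in> W" using b(1) unfolding Sa_eq by simp
  moreover have "pt a b \<notin> P" "pt a b \<notin> \<Union>L" using b(2) unfolding Bad_def by auto
  ultimately show ?thesis by blast
qed

definition bas :: "'a::second_countable_topology set set" where
  "bas = (SOME B. countable B \<and> topological_basis B)"

lemma bas: "countable (bas :: 'a::second_countable_topology set set)" "topological_basis (bas :: 'a set set)"
  using someI_ex[OF ex_countable_basis] unfolding bas_def by blast+

definition oc :: "nat set \<Rightarrow> 'a::second_countable_topology set" where
  "oc N = \<Union>(from_nat_into bas ` N)"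

lemma oc_surj:
  fixes X :: "'a::second_countable_topology set"
  assumes "open X" shows "\<exists>N. oc N = X"
proof -
  obtain B' where B': "B' \<subseteq> bas" "X = \<Union>B'"
    using open_countable_basis_ex[OF assms] unfolding bas_def by blast
  define N where "N = {n. from_nat_into bas n \<in> B'}"
  have "from_nat_into bas ` N = B'"
  proof (intro equalityI subsetI)
    fix b :: "'a set" assume "b \<in> from_nat_into bas ` N"
    then obtain n where "n \<in> N" "b = from_nat_into bas n" by blast
    then show "b \<in> B'" unfolding N_def by simp
  next
    fix b :: "'a set" assume b: "b \<in> B'"
    then have "(bas :: 'a set set) \<noteq> {}" using B'(1) by blast
    then have r: "range (from_nat_into bas) = (bas :: 'a set set)" using bas(1) by (rule range_from_nat_into)
    have "b \<in> bas" using B'(1) b by (rule subsetD)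
    then have "b \<in> range (from_nat_into bas)" unfolding r .
    then obtain n where n: "b = from_nat_into bas n" by (rule rangeE)
    then have "n \<in> N" unfolding N_def using b by simp
    then show "b \<in> from_nat_into bas ` N" using n by (rule rev_image_eqI)
  qed
  then have "oc N = X" unfolding oc_def using B'(2) by simp
  then show ?thesis by (rule exI)
qed

definition cc :: "nat set \<Rightarrow> 'a::second_countable_topology set" where
  "cc N = - oc N"

lemma cc_surj:
  fixes X :: "'a::second_countable_topology set"
  assumes "closed X" shows "\<exists>N. cc N = X"
proof -
  obtain N where "oc N = - X" using oc_surj[of "- X"] assms by auto
  then show ?thesis unfolding cc_def by (intro exI[of _ N]) simp
qed

definition dec :: "nat set \<Rightarrow> nat \<Rightarrow> nat set" where
  "dec N n = {k. prod_encode (n, k) \<in> N}"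

lemma dec_surj: "\<exists>N. \<forall>n. dec N n = f n"
proof (intro exI allI)
  fix n
  show "dec {prod_encode (n, k) | n k. k \<in> f n} n = f n"
    unfolding dec_def by (auto simp: prod_encode_eq)
qed

definition gc :: "nat set \<Rightarrow> 'a::second_countable_topology set" where
  "gc N = oc (dec N 0) \<inter> (\<Inter>n. oc (dec N (Suc n)))"

lemma gc_surj:
  fixes C :: "'a::second_countable_topology set"
  assumes "gdelta_big C" shows "\<exists>N. gc N = C"
proof -
  obtain U \<V> where UV: "open U" "countable \<V>" "\<And>V. V \<in> \<V> \<Longrightarrow> open V" "C = U \<inter> \<Inter>\<V>"
    using assms unfolding gdelta_big_def by blast
  define Vs where "Vs n = (if \<V> = {} then UNIV else from_nat_into \<V> n)" for n
  have oVs: "open (Vs n)" for n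
    unfolding Vs_def using UV(3) from_nat_into[of \<V> n] by auto
  have iVs: "(\<Inter>n. Vs n) = \<Inter>\<V>"
  proof (cases "\<V> = {}")
    case True then show ?thesis unfolding Vs_def by simp
  next
    case False
    then have "range (from_nat_into \<V>) = \<V>" using UV(2) by (rule range_from_nat_into)
    then show ?thesis unfolding Vs_def using False by simp
  qed
  obtain NU where NU: "oc NU = U" using oc_surj[OF UV(1)] by blast
  have "\<forall>n. \<exists>M. oc M = Vs n" using oc_surj[OF oVs] by blast
  then have "\<exists>NV. \<forall>n. oc (NV n) = Vs n" by (rule choice)
  then obtain NV where NV: "\<And>n. oc (NV n) = Vs n" by blast
  obtain N where N: "\<And>n. dec N n = (case n of 0 \<Rightarrow> NU | Suc m \<Rightarrow> NV m)"
    using dec_surj[of "\<lambda>n. case n of 0 \<Rightarrow> NU | Suc m \<Rightarrow> NV m"] by blast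
  have "gc N = U \<inter> (\<Inter>n. Vs n)" unfolding gc_def N using NU NV by simp
  then show ?thesis using iVs UV(4) by auto
qed

lemma enum_exists:
  fixes G1 :: "nat set \<Rightarrow> 'b" and G2 :: "nat set \<Rightarrow> 'c"
  shows "\<exists>(g1 :: real \<Rightarrow> 'b) (g2 :: real \<Rightarrow> (real^2) \<times> real \<times> 'c).
           (\<forall>N. \<exists>x. g1 x = G1 N) \<and> (\<forall>u s N. \<exists>x. g2 x = (u, s, G2 N))"
proof -
  obtain f :: "nat set \<Rightarrow> real" where f: "bij_betw f UNIV UNIV"
    using nat_sets_eqpoll_reals unfolding eqpoll_def by blast
  define h where "h = inv f"
  have hs: "surj h" unfolding h_def using f by (intro inj_imp_surj_inv) (simp add: bij_betw_def)
  have "ordIso2 (card_of (UNIV \<times> UNIV :: (real \<times> real) set)) (card_of (UNIV :: real set))"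
    by (rule card_of_Times_same_infinite[OF infinite_UNIV_real])
  then obtain f2 :: "real \<times> real \<Rightarrow> real" where f2: "bij_betw f2 (UNIV \<times> UNIV) UNIV"
    using card_of_ordIso by blast
  define sg where "sg = inv f2"
  have ss: "surj sg" unfolding sg_def using f2 by (intro inj_imp_surj_inv) (simp add: bij_betw_def)
  define g1 where "g1 x = G1 (h x)" for x
  define g2 where "g2 x = (let (a, y) = sg x; (b, z) = sg y; (c, w) = sg z in (pt a b, c, G2 (h w)))" for x
  have "\<exists>x. g1 x = G1 N" for N
  proof -
    obtain x where "h x = N" using hs by (metis surjD)
    then show ?thesis unfolding g1_def by blast
  qed
  moreover have "\<exists>x. g2 x = (u, s, G2 N)" for u s N
  proof -
    obtain w where w: "h w = N" using hs by (metis surjD)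
    obtain z where z: "sg z = (s, w)" using ss by (metis surjD)
    obtain y where y: "sg y = (u$2, z)" using ss by (metis surjD)
    obtain x where x: "sg x = (u$1, y)" using ss by (metis surjD)
    have "g2 x = (u, s, G2 N)" unfolding g2_def using x y z w by (simp add: pt_eta)
    then show ?thesis by blast
  qed
  ultimately show ?thesis by blast
qed

lemma inner_closed_nonnull:
  fixes S :: "'a::euclidean_space set"
  assumes Sl: "S \<in> sets lebesgue" and n: "S \<notin> null_sets lebesgue" and b: "bounded S"
  shows "\<exists>T. closed T \<and> T \<subseteq> S \<and> T \<notin> null_sets lebesgue"
proof -
  have Sm: "S \<in> lmeasurable" using b Sl by (rule bounded_set_imp_lmeasurable)
  define mu where "mu = measure lebesgue S"
  have emS: "emeasure lebesgue S = ennreal mu"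
    unfolding mu_def using Sm by (intro emeasure_eq_ennreal_measure) (auto simp: fmeasurable_def)
  have mu0: "mu > 0"
  proof (rule ccontr)
    assume "\<not> mu > 0"
    then have "mu = 0" using measure_nonneg[of lebesgue S] unfolding mu_def by simp
    then have "S \<in> null_sets lebesgue" using emS Sl by (intro null_setsI) simp_all
    then show False using n by contradiction
  qed
  obtain T where T: "closed T" "T \<subseteq> S" "S - T \<in> lmeasurable" "emeasure lebesgue (S - T) < ennreal (mu/2)"
    using sets_lebesgue_inner_closed[OF Sl, of "mu/2"] mu0 by auto
  have "emeasure lebesgue (S - T) = ennreal (measure lebesgue (S - T))"
    using T(3) by (intro emeasure_eq_ennreal_measure) (auto simp: fmeasurable_def)
  then have mST: "measure lebesgue (S - T) < mu/2"
    using T(4) mu0 by (simp add: ennreal_less_iff)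
  have Tl: "T \<in> sets lebesgue" using T(1) by (simp add: borel_closed)
  have "S = T \<union> (S - T)" using T(2) by blast
  then have "mu \<le> measure lebesgue T + measure lebesgue (S - T)" unfolding mu_def
    using measure_Un_le[OF Tl, of "S - T"] Sl Tl by (metis sets.Diff)
  then have mT: "measure lebesgue T > 0" using mST mu0 by simp
  have "T \<notin> null_sets lebesgue"
  proof
    assume "T \<in> null_sets lebesgue"
    then have "measure lebesgue T = 0" by (rule measure_eq_0_null_sets)
    then show False using mT by simp
  qed
  then show ?thesis using T(1,2) by blast
qed

lemma orth_proj_eq: "orth_proj p u x = line_param p u (x \<bullet> u - p \<bullet> u)"
  unfolding orth_proj_def line_param_def by (simp add: inner_diff_left)

lemma line_param_inj: "norm u = 1 \<Longrightarrow> inj (line_param p u)"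
  unfolding line_param_def by (rule injI) (auto simp: scaleR_cancel_right)

lemma proj_range:
  assumes u: "norm u = 1" and B: "B \<subseteq> orth_proj p u ` sphere 0 1" and t: "t \<in> line_param p u -` B"
  shows "\<bar>t + p \<bullet> u\<bar> \<le> 1"
proof -
  obtain x where x: "x \<in> sphere 0 1" "line_param p u t = orth_proj p u x" using B t by blast
  then have "t = x \<bullet> u - p \<bullet> u" using line_param_inj[OF u] unfolding orth_proj_eq by (auto dest: injD)
  then have "\<bar>t + p \<bullet> u\<bar> = \<bar>x \<bullet> u\<bar>" by simp
  also have "\<dots> \<le> norm x * norm u" by (rule Cauchy_Schwarz_ineq2)
  also have "\<dots> = 1" using x(1) u by simp
  finally show ?thesis .
qed

lemma proj_finish:
  assumes u: "norm u = 1" and T: "T \<subseteq> line_param p u -` B"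
    and h: "(\<exists>x\<in>A. x \<bullet> u - p \<bullet> u \<in> T) \<and> (\<exists>t\<in>T. \<forall>x\<in>A. x \<bullet> u - p \<bullet> u \<noteq> t)"
  shows "orth_proj p u ` A \<inter> B \<noteq> {} \<and> B - orth_proj p u ` A \<noteq> {}"
proof
  obtain x where x: "x \<in> A" "x \<bullet> u - p \<bullet> u \<in> T" using h by blast
  then have "orth_proj p u x \<in> B" using T unfolding orth_proj_eq by blast
  then show "orth_proj p u ` A \<inter> B \<noteq> {}" using x(1) by blast
next
  obtain t where t: "t \<in> T" "\<forall>x\<in>A. x \<bullet> u - p \<bullet> u \<noteq> t" using h by blast
  have "line_param p u t \<in> B" using t(1) T by blast
  moreover have "line_param p u t \<notin> orth_proj p u ` A"
  proof
    assume "line_param p u t \<in> orth_proj p u ` A"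
    then obtain x where "x \<in> A" "line_param p u t = line_param p u (x \<bullet> u - p \<bullet> u)"
      unfolding orth_proj_eq by blast
    then show False using t(2) line_param_inj[OF u] by (auto dest: injD)
  qed
  ultimately show "B - orth_proj p u ` A \<noteq> {}" by blast
qed

lemma strip_set_borel: "{t::real. \<bar>t + s\<bar> < 1} \<in> sets borel"
proof -
  have "{t::real. \<bar>t + s\<bar> < 1} = ball (-s) 1" by (auto simp: dist_real_def)
  then show ?thesis by simp
qed

lemma strip_diff: assumes "\<bar>t + s\<bar> \<le> 1" "\<not> \<bar>t + s\<bar> < 1" shows "(t::real) \<in> {-1 - s, 1 - s}"
proof (cases "0 \<le> t + s")
  case True then have "t + s = 1" using assms by simp
  then show ?thesis by simp
next
  case False then have "t + s = -1" using assms by simp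
  then show ?thesis by simp
qed

lemma C_subset_strip:
  assumes u: "norm u = 1" and B: "B \<subseteq> orth_proj p u ` sphere 0 1"
  shows "line_param p u -` B \<subseteq> (line_param p u -` B \<inter> {t. \<bar>t + p \<bullet> u\<bar> < 1}) \<union> {-1 - p \<bullet> u, 1 - p \<bullet> u}"
proof
  fix t assume t: "t \<in> line_param p u -` B"
  have "\<bar>t + p \<bullet> u\<bar> \<le> 1" by (rule proj_range[OF u B t])
  then show "t \<in> (line_param p u -` B \<inter> {t. \<bar>t + p \<bullet> u\<bar> < 1}) \<union> {-1 - p \<bullet> u, 1 - p \<bullet> u}"
    using t strip_diff[of t "p \<bullet> u"] by blast
qed

lemma strip_bounded: "bounded {t::real. \<bar>t + s\<bar> < 1}"
proof -
  have "{t::real. \<bar>t + s\<bar> < 1} = ball (-s) 1" by (auto simp: dist_real_def)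
  then show ?thesis by simp
qed

theorem mainTheorem6:
  shows "(\<exists>A. A \<subseteq> cball (0::real^2) 1 \<and>
            completely_nonmeasurable plane_null (sets borel) (cball 0 1) A \<and>
            (\<forall>p u. norm u = 1 \<longrightarrow>
               completely_nonmeasurable (line_null p u) (line_borel p u)
                 (orth_proj p u ` sphere 0 1) (orth_proj p u ` A)))
       \<and> (\<exists>A. A \<subseteq> cball (0::real^2) 1 \<and>
            completely_nonmeasurable plane_meager (sets borel) (cball 0 1) A \<and>
            (\<forall>p u. norm u = 1 \<longrightarrow>
               completely_nonmeasurable (line_meager p u) (line_borel p u)
                 (orth_proj p u ` sphere 0 1) (orth_proj p u ` A)))"
proof
  define bigP :: "(real^2) set \<Rightarrow> bool" where "bigP W \<longleftrightarrow> closed W \<and> W \<notin> null_sets lebesgue" for W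
  define bigL :: "real set \<Rightarrow> bool" where "bigL C \<longleftrightarrow> closed C \<and> C \<notin> null_sets lebesgue" for C
  obtain g1 :: "real \<Rightarrow> (real^2) set" and g2 :: "real \<Rightarrow> (real^2) \<times> real \<times> real set"
    where g: "\<And>N. \<exists>x. g1 x = cc N" "\<And>u s N. \<exists>x. g2 x = (u, s, cc N)"
    using enum_exists[of cc cc] by blast
  have "\<exists>A. A \<subseteq> cball 0 1 \<and> (\<forall>W. bigP W \<and> W \<subseteq> cball 0 1 \<longrightarrow> A \<inter> W \<noteq> {} \<and> W - A \<noteq> {}) \<and>
     (\<forall>u s C. norm u = 1 \<and> bigL C \<and> C \<subseteq> {t. \<bar>t+s\<bar> < 1} \<longrightarrow>
        (\<exists>x\<in>A. x \<bullet> u - s \<in> C) \<and> (\<exists>t\<in>C. \<forall>x\<in>A. x \<bullet> u - s \<noteq> t))"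
  proof (rule construction)
    fix W P :: "(real^2) set" and L :: "(real^2) set set"
    assume "bigP W" "small P" "small L" "L \<subseteq> Lines"
    then show "\<exists>x\<in>W. x \<notin> P \<and> x \<notin> \<Union>L" unfolding bigP_def using null_plane by blast
  next
    fix C assume "bigL C"
    then show "\<not> small C" unfolding bigL_def by (intro lebesgue_not_small) (auto simp: borel_closed)
  next
    fix W assume "bigP W" "W \<subseteq> cball 0 1"
    then obtain N where "cc N = W" using cc_surj unfolding bigP_def by blast
    then show "\<exists>x. g1 x = W" using g(1)[of N] by simp
  next
    fix u s C assume "bigL C"
    then obtain N where "cc N = C" using cc_surj unfolding bigL_def by blast
    then show "\<exists>x. g2 x = (u, s, C)" using g(2)[of u s N] by simp
  qed
  then obtain A where A0: "A \<subseteq> cball 0 1"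
    "\<forall>W. bigP W \<and> W \<subseteq> cball 0 1 \<longrightarrow> A \<inter> W \<noteq> {} \<and> W - A \<noteq> {}"
    "\<forall>u s C. norm u = 1 \<and> bigL C \<and> C \<subseteq> {t. \<bar>t+s\<bar> < 1} \<longrightarrow>
        (\<exists>x\<in>A. x \<bullet> u - s \<in> C) \<and> (\<exists>t\<in>C. \<forall>x\<in>A. x \<bullet> u - s \<noteq> t)"
    by (elim exE conjE) (rule that)
  have A: "A \<subseteq> cball 0 1"
    "\<And>W. bigP W \<Longrightarrow> W \<subseteq> cball 0 1 \<Longrightarrow> A \<inter> W \<noteq> {} \<and> W - A \<noteq> {}"
    "\<And>u s C. norm u = 1 \<Longrightarrow> bigL C \<Longrightarrow> C \<subseteq> {t. \<bar>t+s\<bar> < 1} \<Longrightarrow>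
        (\<exists>x\<in>A. x \<bullet> u - s \<in> C) \<and> (\<exists>t\<in>C. \<forall>x\<in>A. x \<bullet> u - s \<noteq> t)"
    using A0 by simp_all
  have P1: "completely_nonmeasurable plane_null (sets borel) (cball 0 1) A"
    unfolding completely_nonmeasurable_def plane_null_def
  proof (intro allI impI)
    fix B :: "(real^2) set" assume B: "B \<in> sets borel \<and> B \<subseteq> cball 0 1 \<and> B \<notin> null_sets lebesgue"
    have "bounded B" using B bounded_subset[OF bounded_cball] by blast
    moreover have "B \<in> sets lebesgue" using B by simp
    ultimately obtain W where W: "closed W" "W \<subseteq> B" "W \<notin> null_sets lebesgue"
      using inner_closed_nonnull B by blast
    have "A \<inter> W \<noteq> {} \<and> W - A \<noteq> {}" using A(2)[of W] W B unfolding bigP_def by blast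
    then show "A \<inter> B \<noteq> {} \<and> B - A \<noteq> {}" using W(2) by blast
  qed
  have P2: "completely_nonmeasurable (line_null p u) (line_borel p u)
                 (orth_proj p u ` sphere 0 1) (orth_proj p u ` A)" if u: "norm u = 1" for p u
    unfolding completely_nonmeasurable_def line_null_def line_borel_def
  proof (intro allI impI)
    fix B assume B: "B \<in> {B. B \<subseteq> line p u \<and> line_param p u -` B \<in> sets borel} \<and>
        B \<subseteq> orth_proj p u ` sphere 0 1 \<and> line_param p u -` B \<notin> null_sets lebesgue"
    define s where "s = p \<bullet> u"
    define C' where "C' = line_param p u -` B"
    define C'' where "C'' = C' \<inter> {t. \<bar>t + s\<bar> < 1}"
    have C'b: "C' \<in> sets borel" using B unfolding C'_def by simp
    have C''b: "C'' \<in> sets borel" unfolding C''_def using C'b strip_set_borel by (rule sets.Int)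
    have sub: "C' \<subseteq> C'' \<union> {-1 - s, 1 - s}"
      unfolding C'_def C''_def s_def using C_subset_strip[OF u] B by blast
    have "C'' \<notin> null_sets lebesgue"
    proof
      assume "C'' \<in> null_sets lebesgue"
      moreover have "{-1 - s, 1 - s} \<in> null_sets lebesgue"
        by (rule null_sets_completionI) (simp add: finite_imp_null_set_lborel)
      ultimately have "C'' \<union> {-1 - s, 1 - s} \<in> null_sets lebesgue" by (rule null_sets.Un)
      moreover have "C' \<in> sets lebesgue" using C'b by simp
      ultimately have "C' \<in> null_sets lebesgue" using sub by (rule null_sets_subset)
      then show False using B unfolding C'_def by simp
    qed
    moreover have "bounded C''" unfolding C''_def by (rule bounded_subset[OF strip_bounded]) auto
    moreover have "C'' \<in> sets lebesgue" using C''b by simp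
    ultimately obtain T where T: "closed T" "T \<subseteq> C''" "T \<notin> null_sets lebesgue"
      using inner_closed_nonnull by blast
    have "bigL T" unfolding bigL_def using T by simp
    moreover have "T \<subseteq> {t. \<bar>t + s\<bar> < 1}" using T(2) unfolding C''_def by blast
    ultimately have h: "(\<exists>x\<in>A. x \<bullet> u - s \<in> T) \<and> (\<exists>t\<in>T. \<forall>x\<in>A. x \<bullet> u - s \<noteq> t)"
      using A(3)[OF u] by blast
    have "T \<subseteq> line_param p u -` B" using T(2) unfolding C''_def C'_def by blast
    then show "orth_proj p u ` A \<inter> B \<noteq> {} \<and> B - orth_proj p u ` A \<noteq> {}"
      using proj_finish[OF u _ h[unfolded s_def]] by blast
  qed
  show "\<exists>A. A \<subseteq> cball (0::real^2) 1 \<and>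
            completely_nonmeasurable plane_null (sets borel) (cball 0 1) A \<and>
            (\<forall>p u. norm u = 1 \<longrightarrow>
               completely_nonmeasurable (line_null p u) (line_borel p u)
                 (orth_proj p u ` sphere 0 1) (orth_proj p u ` A))"
    by (intro exI[of _ A] conjI allI impI A(1) P1 P2)
next
  obtain g1 :: "real \<Rightarrow> (real^2) set" and g2 :: "real \<Rightarrow> (real^2) \<times> real \<times> real set"
    where g: "\<And>N. \<exists>x. g1 x = gc N" "\<And>u s N. \<exists>x. g2 x = (u, s, gc N)"
    using enum_exists[of gc gc] by blast
  have "\<exists>A. A \<subseteq> cball 0 1 \<and> (\<forall>W::(real^2) set. gdelta_big W \<and> W \<subseteq> cball 0 1 \<longrightarrow> A \<inter> W \<noteq> {} \<and> W - A \<noteq> {}) \<and>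
     (\<forall>(u::real^2) (s::real) (C::real set). norm u = 1 \<and> gdelta_big C \<and> C \<subseteq> {t. \<bar>t+s\<bar> < 1} \<longrightarrow>
        (\<exists>x\<in>A. x \<bullet> u - s \<in> C) \<and> (\<exists>t\<in>C. \<forall>x\<in>A. x \<bullet> u - s \<noteq> t))"
  proof (rule construction)
    fix W P :: "(real^2) set" and L :: "(real^2) set set"
    assume "gdelta_big W" "small P" "small L" "L \<subseteq> Lines"
    then show "\<exists>x\<in>W. x \<notin> P \<and> x \<notin> \<Union>L" using gdelta_big_plane by blast
  next
    fix C :: "real set" assume "gdelta_big C"
    then show "\<not> small C" by (rule gdelta_big_not_small)
  next
    fix W :: "(real^2) set" assume "gdelta_big W" "W \<subseteq> cball 0 1"
    then obtain N where "gc N = W" using gc_surj by blast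
    then show "\<exists>x. g1 x = W" using g(1)[of N] by simp
  next
    fix u s and C :: "real set" assume "gdelta_big C"
    then obtain N where "gc N = C" using gc_surj by blast
    then show "\<exists>x. g2 x = (u, s, C)" using g(2)[of u s N] by simp
  qed
  then obtain A where A0: "A \<subseteq> cball 0 1"
    "\<forall>W::(real^2) set. gdelta_big W \<and> W \<subseteq> cball 0 1 \<longrightarrow> A \<inter> W \<noteq> {} \<and> W - A \<noteq> {}"
    "\<forall>(u::real^2) (s::real) (C::real set). norm u = 1 \<and> gdelta_big C \<and> C \<subseteq> {t. \<bar>t+s\<bar> < 1} \<longrightarrow>
        (\<exists>x\<in>A. x \<bullet> u - s \<in> C) \<and> (\<exists>t\<in>C. \<forall>x\<in>A. x \<bullet> u - s \<noteq> t)"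
    by (elim exE conjE) (rule that)
  have A: "A \<subseteq> cball 0 1"
    "\<And>W::(real^2) set. gdelta_big W \<Longrightarrow> W \<subseteq> cball 0 1 \<Longrightarrow> A \<inter> W \<noteq> {} \<and> W - A \<noteq> {}"
    "\<And>(u::real^2) (s::real) (C::real set). norm u = 1 \<Longrightarrow> gdelta_big C \<Longrightarrow> C \<subseteq> {t. \<bar>t+s\<bar> < 1} \<Longrightarrow>
        (\<exists>x\<in>A. x \<bullet> u - s \<in> C) \<and> (\<exists>t\<in>C. \<forall>x\<in>A. x \<bullet> u - s \<noteq> t)"
    using A0 by simp_all
  have P1: "completely_nonmeasurable plane_meager (sets borel) (cball 0 1) A"
    unfolding completely_nonmeasurable_def plane_meager_def
  proof (intro allI impI)
    fix B :: "(real^2) set" assume B: "B \<in> sets borel \<and> B \<subseteq> cball 0 1 \<and> \<not> meager B"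
    then obtain W where W: "W \<subseteq> B" "gdelta_big W" using borel_nonmeager_gdelta by blast
    have "A \<inter> W \<noteq> {} \<and> W - A \<noteq> {}" using A(2)[of W] W B by blast
    then show "A \<inter> B \<noteq> {} \<and> B - A \<noteq> {}" using W(1) by blast
  qed
  have P2: "completely_nonmeasurable (line_meager p u) (line_borel p u)
                 (orth_proj p u ` sphere 0 1) (orth_proj p u ` A)" if u: "norm u = 1" for p u
    unfolding completely_nonmeasurable_def line_meager_def line_borel_def
  proof (intro allI impI)
    fix B assume B: "B \<in> {B. B \<subseteq> line p u \<and> line_param p u -` B \<in> sets borel} \<and>
        B \<subseteq> orth_proj p u ` sphere 0 1 \<and> \<not> meager (line_param p u -` B)"
    define s where "s = p \<bullet> u"
    define C' where "C' = line_param p u -` B"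
    define C'' where "C'' = C' \<inter> {t. \<bar>t + s\<bar> < 1}"
    have C'b: "C' \<in> sets borel" using B unfolding C'_def by simp
    have C''b: "C'' \<in> sets borel" unfolding C''_def using C'b strip_set_borel by (rule sets.Int)
    have sub: "C' \<subseteq> C'' \<union> {-1 - s, 1 - s}"
      unfolding C'_def C''_def s_def using C_subset_strip[OF u] B by blast
    have "\<not> meager C''"
    proof
      assume "meager C''"
      then have "meager (C'' \<union> {-1 - s, 1 - s})" using meager_finite[of "{-1 - s, 1 - s}"]
        by (intro meager_Un) auto
      then have "meager C'" using sub by (intro meager_subset[of C' "C'' \<union> {-1 - s, 1 - s}"])
      then show False using B unfolding C'_def by simp
    qed
    then obtain T where T: "T \<subseteq> C''" "gdelta_big T" using borel_nonmeager_gdelta[OF C''b] by blast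
    have "T \<subseteq> {t. \<bar>t + s\<bar> < 1}" using T(1) unfolding C''_def by blast
    then have h: "(\<exists>x\<in>A. x \<bullet> u - s \<in> T) \<and> (\<exists>t\<in>T. \<forall>x\<in>A. x \<bullet> u - s \<noteq> t)"
      using A(3)[OF u T(2)] by blast
    have "T \<subseteq> line_param p u -` B" using T(1) unfolding C''_def C'_def by blast
    then show "orth_proj p u ` A \<inter> B \<noteq> {} \<and> B - orth_proj p u ` A \<noteq> {}"
      using proj_finish[OF u _ h[unfolded s_def]] by blast
  qed
  show "\<exists>A. A \<subseteq> cball (0::real^2) 1 \<and>
            completely_nonmeasurable plane_meager (sets borel) (cball 0 1) A \<and>
            (\<forall>p u. norm u = 1 \<longrightarrow>
               completely_nonmeasurable (line_meager p u) (line_borel p u)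
                 (orth_proj p u ` sphere 0 1) (orth_proj p u ` A))"
    by (intro exI[of _ A] conjI allI impI A(1) P1 P2)
qed

end
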